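(* Let $\bar\mu_0\ge0$ and $\lambda_j=L^{k-j}$. For every $f\in\mathcal L^2(\Omega)$ and $x\in\Omega$, $$(G_k(\Omega)f)(x)=\sum_{j=1}^{k-1}\lambda_j^{-2}\big(C'_j(\lambda_j\Omega)f_{\lambda_j}\big)(\lambda_jx)+\lambda_1^{-2}\big(G_1(\lambda_1\Omega)f_{\lambda_1}\big)(\lambda_1x),$$ where $f_\lambda(x')=f(\lambda^{-1}x')$ for $x'\in\lambda\Omega$.
   Context: Setup: $d\ge1$, odd integer $L>1$, integers $k\ge1$, $m\ge k$, $\eta=L^{-k}$, $\Omega=\eta\{0,\dots,L^m-1\}^d$, $\Omega_i=(L^i\eta)\{0,\dots,L^{m-i}-1\}^d$. Fix $a\in(0,1]$, $a_j=a\frac{1-L^{-2}}{1-L^{-2j}}$, $\bar\mu_j=L^{2j}\bar\mu_0$. For $1\le j\le k$ put $\lambda_j=L^{k-j}$ and $\Omega^{(j)}=\lambda_j\Omega=L^{-j}\{0,\dots,L^m-1\}^d$ (lattice spacing $L^{-j}$), with coarse lattices $\Omega^{(j)}_i=\lambda_j\Omega_i$ (so $\Omega^{(j)}_j\subset\mathbb Z^d$). On a lattice set $O$ of spacing $\epsilon$, $\mathcal L^2(O)$ carries the inner product $\epsilon^d\sum_{x\in O}\bar fg$. For $y\in(L^{i}\epsilon)\mathbb Z^d$, $B^\epsilon_i(y)=\{x\in\epsilon\mathbb Z^d: y_\mu\le x_\mu<y_\mu+L^i\epsilon\ \forall\mu\}$. Averaging $Q_{\Omega^{(j)},j}:\mathcal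 L^2(\Omega^{(j)})\to\mathcal L^2(\Omega^{(j)}_j)$, $(Qf)(y)=L^{-jd}\sum_{x\in B^{L^{-j}}_j(y)}f(x)$, with adjoint $(Q^*h)(x)=h(y_x)$; one-step averaging $Q_{\Omega^{(j)}_j}:\mathcal L^2(\Omega^{(j)}_j)\to\mathcal L^2(\Omega^{(j)}_{j+1})$, $(Q\psi)(y)=L^{-d}\sum_{y'\in\Omega^{(j)}_j,\ y_\mu\le y'_\mu<y_\mu+L}\psi(y')$. The Neumann Laplacian on a set $O\subset\epsilon\mathbb Z^d$ is $(\Delta^\epsilon_O f)(x)=\epsilon^{-2}\sum_\mu(f(x+\epsilon e_\mu)-2f(x)+f(x-\epsilon e_\mu))$ with $f(x\pm\epsilon e_\mu):=f(x)$ if $x\pm\epsilon e_\mu\notin O$. Define $G_j(\Omega^{(j)})=(-\Delta^{L^{-j}}_{\Omega^{(j)}}+\bar\mu_j+a_jQ^*_{\Omega^{(j)},j}Q_{\Omega^{(j)},j})^{-1}$ (for $j=k$ this is $G_k(\Omega)=(-\Delta^\eta_\Omega+\bar\mu_k+a_kQ_{\Omega,k}^*Q_{\Omega,k})^{-1}$), $\mathcal H_j=a_jG_j(\Omega^{(j)})Q^*_{\Omega^{(j)},j}$, $C_j(\Omega^{(j)})=\big(a_j-a_j^2Q_{\Omega^{(j)},j}G_j(\Omega^{(j)})Q^*_{\Omega^{(j)},j}+aL^{-2}Q^*_{\Omega^{(j)}_j}Q_{\Omega^{(j)}_j}\big)^{-1}$ on $\mathcal L^2(\Omega^{(j)}_j)$,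 and $C'_j(\Omega^{(j)})=\mathcal H_jC_j(\Omega^{(j)})\mathcal H_j^*$. *)

theory Defs
  imports "HOL-Analysis.Analysis"
begin

(* Points of the lattices are represented by their actual real coordinates in real^'d,
   d = CARD('d).  Elements of L^2(S) are functions real^'d => complex, of which only the
   values on S matter. *)

definition lat :: "real \<Rightarrow> nat \<Rightarrow> (real^'d) set" where
  "lat eps N = {x. \<forall>\<mu>. \<exists>n::nat. n < N \<and> x$\<mu> = eps * real n}"

definition Vsp :: "(real^'d) set \<Rightarrow> (real^'d \<Rightarrow> complex) set" where
  "Vsp S = {f. \<forall>x. x \<notin> S \<longrightarrow> f x = 0}"

definition ip :: "real \<Rightarrow> (real^'d) set \<Rightarrow> (real^'d \<Rightarrow> complex) \<Rightarrow> (real^'d \<Rightarrow> complex) \<Rightarrow> complex" where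
  "ip eps S f g = complex_of_real (eps ^ CARD('d)) * (\<Sum>x\<in>S. cnj (f x) * g x)"

definition box :: "real \<Rightarrow> real \<Rightarrow> real^'d \<Rightarrow> (real^'d) set" where
  "box eps s y = {x. (\<forall>\<mu>. \<exists>z::int. x$\<mu> = eps * of_int z) \<and>
                     (\<forall>\<mu>. y$\<mu> \<le> x$\<mu> \<and> x$\<mu> < y$\<mu> + s * eps)}"

definition avg :: "real \<Rightarrow> real \<Rightarrow> (real^'d) set \<Rightarrow> (real^'d \<Rightarrow> complex) \<Rightarrow> real^'d \<Rightarrow> complex" where
  "avg eps s S f y = complex_of_real (1 / s ^ CARD('d)) * (\<Sum>x\<in>box eps s y \<inter> S. f x)"

(* Neumann Laplacian on S with spacing eps *)
definition nlap :: "real \<Rightarrow> (real^'d) set \<Rightarrow> (real^'d \<Rightarrow> complex) \<Rightarrow> real^'d \<Rightarrow> complex" where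
  "nlap eps S f x = complex_of_real (1 / eps^2) *
     (\<Sum>\<mu>\<in>UNIV. (let nb = (\<lambda>z. if z \<in> S then f z else f x) in
        nb (x + eps *\<^sub>R axis \<mu> 1) - 2 * f x + nb (x - eps *\<^sub>R axis \<mu> 1)))"

definition opinv :: "(real^'d) set \<Rightarrow> ((real^'d \<Rightarrow> complex) \<Rightarrow> (real^'d \<Rightarrow> complex))
                     \<Rightarrow> (real^'d \<Rightarrow> complex) \<Rightarrow> (real^'d \<Rightarrow> complex)" where
  "opinv S A g = (THE h. h \<in> Vsp S \<and> (\<forall>x\<in>S. A h x = g x))"

definition adj :: "real \<Rightarrow> (real^'d) set \<Rightarrow> real \<Rightarrow> (real^'d) set
                   \<Rightarrow> ((real^'d \<Rightarrow> complex) \<Rightarrow> (real^'d \<Rightarrow> complex))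
                   \<Rightarrow> (real^'d \<Rightarrow> complex) \<Rightarrow> (real^'d \<Rightarrow> complex)" where
  "adj e1 S1 e2 S2 T g = (THE h. h \<in> Vsp S1 \<and> (\<forall>f\<in>Vsp S1. ip e2 S2 (T f) g = ip e1 S1 f h))"

definition aj :: "real \<Rightarrow> nat \<Rightarrow> nat \<Rightarrow> real" where
  "aj a L j = a * (1 - 1 / real L ^ 2) / (1 - 1 / real L ^ (2 * j))"

definition mubar :: "real \<Rightarrow> nat \<Rightarrow> nat \<Rightarrow> real" where
  "mubar mu0 L j = real L ^ (2 * j) * mu0"

(* Omega^(j) = L^{-j}{0..L^m-1}^d, Omega^(j)_j = {0..L^(m-j)-1}^d, Omega^(j)_{j+1} = L{0..L^(m-j-1)-1}^d *)
definition OmJ :: "nat \<Rightarrow> nat \<Rightarrow> nat \<Rightarrow> (real^'d) set" where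
  "OmJ L m j = lat (1 / real L ^ j) (L ^ m)"

definition OmJj :: "nat \<Rightarrow> nat \<Rightarrow> nat \<Rightarrow> (real^'d) set" where
  "OmJj L m j = lat 1 (L ^ (m - j))"

definition OmJj1 :: "nat \<Rightarrow> nat \<Rightarrow> nat \<Rightarrow> (real^'d) set" where
  "OmJj1 L m j = lat (real L) (L ^ (m - j - 1))"

definition QJ :: "nat \<Rightarrow> nat \<Rightarrow> nat \<Rightarrow> (real^'d \<Rightarrow> complex) \<Rightarrow> real^'d \<Rightarrow> complex" where
  "QJ L m j = avg (1 / real L ^ j) (real L ^ j) (OmJ L m j)"

definition QJs :: "nat \<Rightarrow> nat \<Rightarrow> nat \<Rightarrow> (real^'d \<Rightarrow> complex) \<Rightarrow> real^'d \<Rightarrow> complex" where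
  "QJs L m j = adj (1 / real L ^ j) (OmJ L m j) 1 (OmJj L m j) (QJ L m j)"

definition Q1 :: "nat \<Rightarrow> nat \<Rightarrow> nat \<Rightarrow> (real^'d \<Rightarrow> complex) \<Rightarrow> real^'d \<Rightarrow> complex" where
  "Q1 L m j = avg 1 (real L) (OmJj L m j)"

definition Q1s :: "nat \<Rightarrow> nat \<Rightarrow> nat \<Rightarrow> (real^'d \<Rightarrow> complex) \<Rightarrow> real^'d \<Rightarrow> complex" where
  "Q1s L m j = adj 1 (OmJj L m j) (real L) (OmJj1 L m j) (Q1 L m j)"

definition Gop :: "nat \<Rightarrow> nat \<Rightarrow> real \<Rightarrow> real \<Rightarrow> nat \<Rightarrow> (real^'d \<Rightarrow> complex) \<Rightarrow> real^'d \<Rightarrow> complex" where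
  "Gop L m a mu0 j = opinv (OmJ L m j)
     (\<lambda>f x. - nlap (1 / real L ^ j) (OmJ L m j) f x + complex_of_real (mubar mu0 L j) * f x
            + complex_of_real (aj a L j) * QJs L m j (QJ L m j f) x)"

definition Hop :: "nat \<Rightarrow> nat \<Rightarrow> real \<Rightarrow> real \<Rightarrow> nat \<Rightarrow> (real^'d \<Rightarrow> complex) \<Rightarrow> real^'d \<Rightarrow> complex" where
  "Hop L m a mu0 j \<psi> = (\<lambda>x. complex_of_real (aj a L j) * Gop L m a mu0 j (QJs L m j \<psi>) x)"

definition Hs :: "nat \<Rightarrow> nat \<Rightarrow> real \<Rightarrow> real \<Rightarrow> nat \<Rightarrow> (real^'d \<Rightarrow> complex) \<Rightarrow> real^'d \<Rightarrow> complex" where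
  "Hs L m a mu0 j = adj 1 (OmJj L m j) (1 / real L ^ j) (OmJ L m j) (Hop L m a mu0 j)"

definition Cop :: "nat \<Rightarrow> nat \<Rightarrow> real \<Rightarrow> real \<Rightarrow> nat \<Rightarrow> (real^'d \<Rightarrow> complex) \<Rightarrow> real^'d \<Rightarrow> complex" where
  "Cop L m a mu0 j = opinv (OmJj L m j)
     (\<lambda>\<psi> y. complex_of_real (aj a L j) * \<psi> y
            - complex_of_real ((aj a L j)^2) * QJ L m j (Gop L m a mu0 j (QJs L m j \<psi>)) y
            + complex_of_real (a / real L ^ 2) * Q1s L m j (Q1 L m j \<psi>) y)"

definition Cp :: "nat \<Rightarrow> nat \<Rightarrow> real \<Rightarrow> real \<Rightarrow> nat \<Rightarrow> (real^'d \<Rightarrow> complex) \<Rightarrow> real^'d \<Rightarrow> complex" where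
  "Cp L m a mu0 j f = Hop L m a mu0 j (Cop L m a mu0 j (Hs L m a mu0 j f))"

definition rescale :: "real \<Rightarrow> (real^'d \<Rightarrow> complex) \<Rightarrow> real^'d \<Rightarrow> complex" where
  "rescale lam f = (\<lambda>x'. f (inverse lam *\<^sub>R x'))"

end

theory Submission
  imports Defs "HOL-Library.Function_Algebras"
begin

definition scl :: "complex \<Rightarrow> ('b \<Rightarrow> complex) \<Rightarrow> ('b \<Rightarrow> complex)" where
 "scl c f = (\<lambda>x. c * f x)"

lemma vs_scl: "vector_space scl"
  by unfold_locales (auto simp: scl_def fun_eq_iff algebra_simps)

lemma mod_scl: "module scl"
  using vs_scl by (simp add: module_iff_vector_space)

lemma sum_apply: "(sum f A) z = (\<Sum>x\<in>A. f x z)" for f :: "'a \<Rightarrow> 'b \<Rightarrow> 'c::comm_monoid_add"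
  by (induction A rule: infinite_finite_induct) auto

lemma exists_solution:
  fixes A :: "(real^'d \<Rightarrow> complex) \<Rightarrow> real^'d \<Rightarrow> complex" and S :: "(real^'d) set"
  assumes fin: "finite S"
    and add: "\<And>u v y. u \<in> Vsp S \<Longrightarrow> v \<in> Vsp S \<Longrightarrow> y \<in> S \<Longrightarrow> A (\<lambda>z. u z + v z) y = A u y + A v y"
    and hom: "\<And>c u y. u \<in> Vsp S \<Longrightarrow> y \<in> S \<Longrightarrow> A (\<lambda>z. c * u z) y = c * A u y"
    and inj: "\<And>u. u \<in> Vsp S \<Longrightarrow> (\<forall>y\<in>S. A u y = 0) \<Longrightarrow> u = (\<lambda>_. 0)"
  shows "\<exists>h\<in>Vsp S. \<forall>y\<in>S. A h y = g y"
proof -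
  define R where "R u = (\<lambda>z. if z \<in> S then u z else 0)" for u :: "real^'d \<Rightarrow> complex"
  define F where "F u = R (A (R u))" for u
  have RV: "R u \<in> Vsp S" for u by (auto simp: R_def Vsp_def)
  have RVid: "u \<in> Vsp S \<Longrightarrow> R u = u" for u by (auto simp: R_def Vsp_def fun_eq_iff)
  have fadd: "F (b1 + b2) = F b1 + F b2" for b1 b2 :: "real^'d \<Rightarrow> complex"
  proof -
    have "R (b1 + b2) = (\<lambda>z. R b1 z + R b2 z)" by (auto simp: R_def fun_eq_iff)
    then show ?thesis
      using add[OF RV RV] by (auto simp: F_def R_def fun_eq_iff)
  qed
  have fscl: "F (scl r b) = scl r (F b)" for r and b :: "real^'d \<Rightarrow> complex"
  proof -
    have "R (scl r b) = (\<lambda>z. r * R b z)" by (auto simp: R_def scl_def fun_eq_iff)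
    then show ?thesis
      using hom[OF RV] by (auto simp: F_def R_def scl_def fun_eq_iff)
  qed
  have mh: "module_hom scl scl F"
    unfolding module_hom_def module_hom_axioms_def using mod_scl fadd fscl by blast
  define d where "d x = (\<lambda>z. if z = x then (1::complex) else 0)" for x :: "real^'d"
  define B where "B = d ` S"
  have dinj: "inj d" by (auto simp: inj_def d_def fun_eq_iff)
  have subV: "module.subspace scl (Vsp S)"
    by (auto simp: module.subspace_def[OF mod_scl] Vsp_def scl_def)
  have spanB: "module.span scl B = Vsp S"
  proof
    show "module.span scl B \<subseteq> Vsp S"
      by (rule module.span_minimal[OF mod_scl _ subV]) (auto simp: B_def d_def Vsp_def)
  next
    show "Vsp S \<subseteq> module.span scl B"
    proof
      fix u assume u: "u \<in> Vsp S"
      have "u = (\<Sum>x\<in>S. scl (u x) (d x))"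
      proof
        fix z
        show "u z = (\<Sum>x\<in>S. scl (u x) (d x)) z"
        proof (cases "z \<in> S")
          case True
          have "(\<Sum>x\<in>S. scl (u x) (d x)) z = (\<Sum>x\<in>S. u x * d x z)"
            by (simp add: scl_def sum_apply)
          also have "\<dots> = (\<Sum>x\<in>S. if z = x then u x else 0)"
            by (rule sum.cong) (auto simp: d_def)
          also have "\<dots> = u z" using True fin by simp
          finally show ?thesis by simp
        next
          case False
          then show ?thesis using u by (auto simp: scl_def sum_apply d_def Vsp_def intro!: sum.neutral)
        qed
      qed
      also have "\<dots> \<in> module.span scl B"
        by (intro module.span_sum[OF mod_scl] module.span_scale[OF mod_scl] module.span_base[OF mod_scl])
           (auto simp: B_def)
      finally show "u \<in> module.span scl B" .
    qed
  qed
  have indB: "\<not> module.dependent scl B"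
    unfolding module.independent_explicit_module[OF mod_scl]
  proof (intro allI impI)
    fix t c v
    assume t: "finite t" "t \<subseteq> B" and s: "(\<Sum>v\<in>t. scl (c v) v) = 0" and v: "v \<in> t"
    then obtain x where x: "v = d x" by (auto simp: B_def)
    have "0 = (\<Sum>w\<in>t. scl (c w) w) x" using s by simp
    also have "\<dots> = (\<Sum>w\<in>t. c w * w x)" by (simp add: scl_def sum_apply)
    also have "\<dots> = c v * v x + (\<Sum>w\<in>t - {v}. c w * w x)"
      using t v by (simp add: sum.remove)
    also have "(\<Sum>w\<in>t - {v}. c w * w x) = 0"
    proof (rule sum.neutral, intro ballI)
      fix w assume w: "w \<in> t - {v}"
      then obtain x' where "w = d x'" using t by (auto simp: B_def)
      with w x show "c w * w x = 0" by (auto simp: d_def)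
    qed
    finally show "c v = 0" by (simp add: x d_def)
  qed
  have finB: "finite B" using fin by (simp add: B_def)
  have Fsub: "F u \<in> Vsp S" for u by (simp add: F_def RV)
  have injF: "inj_on F (module.span scl B)"
    unfolding spanB
  proof (rule inj_onI)
    fix u v assume u: "u \<in> Vsp S" and v: "v \<in> Vsp S" and e: "F u = F v"
    have w: "(\<lambda>z. u z + (-1) * v z) \<in> Vsp S" using u v by (auto simp: Vsp_def)
    have "(\<lambda>z. u z + (-1) * v z) = (\<lambda>_. 0)"
    proof (rule inj[OF w], intro ballI)
      fix y assume y: "y \<in> S"
      have "F u y = F v y" using e by simp
      hence "A u y = A v y" using y RVid[OF u] RVid[OF v] by (simp add: F_def R_def)
      then show "A (\<lambda>z. u z + (-1) * v z) y = 0"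
        using add[OF u _ y, of "\<lambda>z. (-1) * v z"] hom[OF v y, of "-1"] v by (auto simp: Vsp_def)
    qed
    then show "u = v" by (auto simp: fun_eq_iff)
  qed
  have indFB: "\<not> module.dependent scl (F ` B)"
    by (rule module_hom.independent_injective_image[OF mh indB injF])
  define g' where "g' = R g"
  have "g' \<in> module.span scl (F ` B)"
  proof (rule ccontr)
    assume ng: "g' \<notin> module.span scl (F ` B)"
    have ind2: "\<not> module.dependent scl (insert g' (F ` B))"
      by (rule vector_space.independent_insertI[OF vs_scl ng indFB])
    have "insert g' (F ` B) \<subseteq> module.span scl B"
      unfolding spanB using Fsub by (auto simp: g'_def RV)
    from vector_space.independent_span_bound[OF vs_scl finB ind2 this]
    have "card (insert g' (F ` B)) \<le> card B" by simp
    moreover have "g' \<notin> F ` B" using ng module.span_base[OF mod_scl] by blast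
    moreover have "card (F ` B) = card B"
      using injF module.span_superset[OF mod_scl] by (intro card_image) (auto intro: inj_on_subset)
    ultimately show False using finB by simp
  qed
  then obtain u where u: "u \<in> module.span scl B" "F u = g'"
    using module_hom.span_image[OF mh] by auto
  have uV: "u \<in> Vsp S" using u spanB by auto
  show ?thesis
  proof (intro bexI[OF _ uV] ballI)
    fix y assume y: "y \<in> S"
    have "F u y = g' y" using u by simp
    then show "A u y = g y" using y RVid[OF uV] by (simp add: F_def R_def g'_def)
  qed
qed


lemma ip_cnj: "cnj (ip e S f g) = ip e S g f"
  by (simp add: ip_def mult.commute)

lemma ip_self: "ip e S f f = complex_of_real (e ^ CARD('d) * (\<Sum>x\<in>S. (cmod (f x))^2))"
  for f :: "real^'d \<Rightarrow> complex"
proof -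
  have "(\<Sum>x\<in>S. cnj (f x) * f x) = complex_of_real (\<Sum>x\<in>S. (cmod (f x))^2)"
    unfolding of_real_sum by (rule sum.cong) (simp_all only: complex_norm_square mult.commute)
  thus ?thesis by (simp add: ip_def)
qed

lemma ip_self_zero:
  fixes f :: "real^'d \<Rightarrow> complex"
  assumes "e > 0" "finite S" "ip e S f f = 0" "x \<in> S"
  shows "f x = 0"
proof -
  have "e ^ CARD('d) * (\<Sum>x\<in>S. (cmod (f x))^2) = 0" using assms(3) unfolding ip_self of_real_eq_0_iff .
  hence "(\<Sum>x\<in>S. (cmod (f x))^2) = 0" using assms(1) by simp
  hence "\<forall>x\<in>S. (cmod (f x))^2 = 0" using assms(2) by (simp add: sum_nonneg_eq_0_iff)
  thus ?thesis using assms(4) by simp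
qed

lemma ip_cong: "(\<And>x. x \<in> S \<Longrightarrow> f x = f' x) \<Longrightarrow> (\<And>x. x \<in> S \<Longrightarrow> g x = g' x) \<Longrightarrow> ip e S f g = ip e S f' g'"
  by (simp add: ip_def)

lemma adj_unique:
  fixes T :: "(real^'d \<Rightarrow> complex) \<Rightarrow> real^'d \<Rightarrow> complex"
  assumes e1: "e1 > 0" and fin: "finite S1" and h: "h \<in> Vsp S1"
    and eq: "\<And>f. f \<in> Vsp S1 \<Longrightarrow> ip e2 S2 (T f) g = ip e1 S1 f h"
  shows "adj e1 S1 e2 S2 T g = h"
  unfolding adj_def
proof (rule the_equality)
  show "h \<in> Vsp S1 \<and> (\<forall>f\<in>Vsp S1. ip e2 S2 (T f) g = ip e1 S1 f h)" using h eq by auto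
next
  fix h' assume h': "h' \<in> Vsp S1 \<and> (\<forall>f\<in>Vsp S1. ip e2 S2 (T f) g = ip e1 S1 f h')"
  define w where "w = (\<lambda>x. h' x - h x)"
  have wV: "w \<in> Vsp S1" using h h' by (auto simp: Vsp_def w_def)
  have "ip e1 S1 w h' = ip e1 S1 w h" using h' eq[OF wV] wV by auto
  moreover have "ip e1 S1 w w = ip e1 S1 w h' - ip e1 S1 w h"
    by (simp add: ip_def w_def right_diff_distrib sum_subtractf)
  ultimately have "ip e1 S1 w w = 0" by simp
  hence "\<forall>x\<in>S1. w x = 0" using ip_self_zero[OF e1 fin] by blast
  thus "h' = h" using h h' by (auto simp: fun_eq_iff w_def Vsp_def)
qed

definition linop :: "(real^'d) set \<Rightarrow> ((real^'d \<Rightarrow> complex) \<Rightarrow> real^'d \<Rightarrow> complex) \<Rightarrow> bool" where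
  "linop S A \<longleftrightarrow> (\<forall>u v y. u \<in> Vsp S \<longrightarrow> v \<in> Vsp S \<longrightarrow> y \<in> S \<longrightarrow> A (\<lambda>z. u z + v z) y = A u y + A v y)
     \<and> (\<forall>c u y. u \<in> Vsp S \<longrightarrow> y \<in> S \<longrightarrow> A (\<lambda>z. c * u z) y = c * A u y)"

definition injop :: "(real^'d) set \<Rightarrow> ((real^'d \<Rightarrow> complex) \<Rightarrow> real^'d \<Rightarrow> complex) \<Rightarrow> bool" where
  "injop S A \<longleftrightarrow> (\<forall>u\<in>Vsp S. (\<forall>y\<in>S. A u y = 0) \<longrightarrow> u = (\<lambda>_. 0))"

lemma opinv_unique:
  assumes lin: "linop S A" and inj: "injop S A" and h: "h \<in> Vsp S" and eq: "\<And>y. y \<in> S \<Longrightarrow> A h y = g y"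
  shows "opinv S A g = h"
  unfolding opinv_def
proof (rule the_equality)
  show "h \<in> Vsp S \<and> (\<forall>x\<in>S. A h x = g x)" using h eq by auto
next
  fix h' assume h': "h' \<in> Vsp S \<and> (\<forall>x\<in>S. A h' x = g x)"
  define w where "w = (\<lambda>z. h' z + (-1) * h z)"
  have hm: "(\<lambda>z. (-1) * h z) \<in> Vsp S" using h by (auto simp: Vsp_def)
  have wV: "w \<in> Vsp S" using h h' by (auto simp: Vsp_def w_def)
  have "\<forall>y\<in>S. A w y = 0"
  proof
    fix y assume y: "y \<in> S"
    have "A w y = A h' y + A (\<lambda>z. (-1) * h z) y"
      unfolding w_def using lin[unfolded linop_def] h' hm y by blast
    also have "A (\<lambda>z. (-1) * h z) y = (-1) * A h y"
      using lin[unfolded linop_def] h y by blast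
    finally have "A w y = A h' y + (-1) * A h y" .
    thus "A w y = 0" using h' eq y by simp
  qed
  hence "w = (\<lambda>_. 0)" using inj wV unfolding injop_def by blast
  thus "h' = h" by (auto simp: fun_eq_iff w_def)
qed

lemma opinv_sol:
  assumes fin: "finite S" and lin: "linop S A" and inj: "injop S A"
  shows "opinv S A g \<in> Vsp S \<and> (\<forall>y\<in>S. A (opinv S A g) y = g y)"
proof -
  obtain h where h: "h \<in> Vsp S" "\<forall>y\<in>S. A h y = g y"
    using exists_solution[OF fin, of A g] lin inj unfolding linop_def injop_def by blast
  have "opinv S A g = h" by (rule opinv_unique[OF lin inj h(1)]) (use h in auto)
  thus ?thesis using h by simp
qed

lemma blk_adj_prop:
  fixes Q :: "(real^'d \<Rightarrow> complex) \<Rightarrow> real^'d \<Rightarrow> complex" and p :: "real^'d \<Rightarrow> real^'d"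
  assumes finS: "finite S" and finT: "finite T" and pST: "p ` S \<subseteq> T"
    and Q: "\<And>f y. y \<in> T \<Longrightarrow> Q f y = complex_of_real c * (\<Sum>z\<in>{z\<in>S. p z = y}. f z)"
    and c: "ec ^ CARD('d) * c = ef ^ CARD('d)"
  shows "ip ec T (Q f) g = ip ef S f (\<lambda>x. if x \<in> S then g (p x) else 0)"
proof -
  have "ip ec T (Q f) g = complex_of_real (ec ^ CARD('d)) * (\<Sum>y\<in>T. cnj (complex_of_real c * (\<Sum>z\<in>{z\<in>S. p z = y}. f z)) * g y)"
    unfolding ip_def using Q by (intro arg_cong2[where f="(*)"] sum.cong) auto
  also have "(\<Sum>y\<in>T. cnj (complex_of_real c * (\<Sum>z\<in>{z\<in>S. p z = y}. f z)) * g y)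
      = complex_of_real c * (\<Sum>y\<in>T. (\<Sum>z\<in>{z\<in>S. p z = y}. cnj (f z) * g (p z)))"
    by (simp add: sum_distrib_left sum_distrib_right cnj_sum mult.assoc)
  also have "(\<Sum>y\<in>T. (\<Sum>z\<in>{z\<in>S. p z = y}. cnj (f z) * g (p z))) = (\<Sum>z\<in>S. cnj (f z) * g (p z))"
    by (rule sum.group[OF finS finT pST])
  also have "(\<Sum>z\<in>S. cnj (f z) * g (p z)) = (\<Sum>z\<in>S. cnj (f z) * (if z \<in> S then g (p z) else 0))"
    by (rule sum.cong) auto
  also have "complex_of_real (ec ^ CARD('d)) * (complex_of_real c * (\<Sum>z\<in>S. cnj (f z) * (if z \<in> S then g (p z) else 0)))
      = complex_of_real (ef ^ CARD('d)) * (\<Sum>z\<in>S. cnj (f z) * (if z \<in> S then g (p z) else 0))"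
    by (metis (no_types) c mult.assoc of_real_mult)
  finally show ?thesis unfolding ip_def .
qed

lemma blk_adj:
  fixes Q :: "(real^'d \<Rightarrow> complex) \<Rightarrow> real^'d \<Rightarrow> complex" and p :: "real^'d \<Rightarrow> real^'d"
  assumes ef: "ef > 0" and finS: "finite S" and finT: "finite T" and pST: "p ` S \<subseteq> T"
    and Q: "\<And>f y. y \<in> T \<Longrightarrow> Q f y = complex_of_real c * (\<Sum>z\<in>{z\<in>S. p z = y}. f z)"
    and c: "ec ^ CARD('d) * c = ef ^ CARD('d)"
  shows "adj ef S ec T Q g = (\<lambda>x. if x \<in> S then g (p x) else 0)"
  by (rule adj_unique[OF ef finS]) (auto simp: Vsp_def intro!: blk_adj_prop[OF finS finT pST Q c])

lemma nlap_alt: "nlap e S v x = complex_of_real (1/e^2) *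
   (\<Sum>\<mu>\<in>UNIV. ((if x + e *\<^sub>R axis \<mu> 1 \<in> S then v (x + e *\<^sub>R axis \<mu> 1) else v x) - v x)
             + ((if x - e *\<^sub>R axis \<mu> 1 \<in> S then v (x - e *\<^sub>R axis \<mu> 1) else v x) - v x))"
  unfolding nlap_def Let_def by (simp add: algebra_simps)

definition dterm :: "real \<Rightarrow> (real^'d) set \<Rightarrow> (real^'d \<Rightarrow> complex) \<Rightarrow> real^'d \<Rightarrow> 'd \<Rightarrow> complex" where
  "dterm e S v x \<mu> = ((if x + e *\<^sub>R axis \<mu> 1 \<in> S then v (x + e *\<^sub>R axis \<mu> 1) else v x) - v x)
             + ((if x - e *\<^sub>R axis \<mu> 1 \<in> S then v (x - e *\<^sub>R axis \<mu> 1) else v x) - v x)"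

lemma nlap_alt2: "nlap e S v x = complex_of_real (1/e^2) * (\<Sum>\<mu>\<in>UNIV. dterm e S v x \<mu>)"
  unfolding nlap_alt dterm_def ..

lemma dterm_add: "dterm e S (\<lambda>z. u z + v z) x \<mu> = dterm e S u x \<mu> + dterm e S v x \<mu>"
  unfolding dterm_def by (simp split: if_splits)

lemma dterm_scale: "dterm e S (\<lambda>z. c * u z) x \<mu> = c * dterm e S u x \<mu>"
  unfolding dterm_def by (simp add: right_diff_distrib distrib_left split: if_splits)

lemma nlap_add: "nlap e S (\<lambda>z. u z + v z) x = nlap e S u x + nlap e S v x"
  unfolding nlap_alt2 dterm_add by (simp add: sum.distrib distrib_left)

lemma nlap_scale: "nlap e S (\<lambda>z. c * u z) x = c * nlap e S u x"
  unfolding nlap_alt2 dterm_scale by (simp add: sum_distrib_left mult.left_commute)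

lemma neg_dterm: "- dterm e S v x \<mu> = (v x - (if x + e *\<^sub>R axis \<mu> 1 \<in> S then v (x + e *\<^sub>R axis \<mu> 1) else v x))
   + (v x - (if x - e *\<^sub>R axis \<mu> 1 \<in> S then v (x - e *\<^sub>R axis \<mu> 1) else v x))"
  unfolding dterm_def by (simp add: algebra_simps)

definition bsum :: "real \<Rightarrow> (real^'d) set \<Rightarrow> 'd \<Rightarrow> (real^'d \<Rightarrow> complex) \<Rightarrow> (real^'d \<Rightarrow> complex) \<Rightarrow> complex" where
  "bsum e S \<mu> u v = (\<Sum>w\<in>{w\<in>S. w + e *\<^sub>R axis \<mu> 1 \<in> S}.
      cnj (u (w + e *\<^sub>R axis \<mu> 1) - u w) * (v (w + e *\<^sub>R axis \<mu> 1) - v w))"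

lemma bond_lemma:
  fixes E :: "real^'d"
  assumes fin: "finite S"
  shows "(\<Sum>x\<in>S. cnj (u x) * ((v x - (if x + E \<in> S then v (x + E) else v x)) + (v x - (if x - E \<in> S then v (x - E) else v x))))
       = (\<Sum>w\<in>{w\<in>S. w + E \<in> S}. cnj (u (w + E) - u w) * (v (w + E) - v w))"
proof -
  have s1: "(\<Sum>x\<in>S. cnj (u x) * (v x - (if x + E \<in> S then v (x + E) else v x)))
      = (\<Sum>w\<in>{w\<in>S. w + E \<in> S}. cnj (u w) * (v w - v (w + E)))"
    using fin by (simp add: sum.inter_filter) (rule sum.cong, auto)
  have s2: "(\<Sum>x\<in>S. cnj (u x) * (v x - (if x - E \<in> S then v (x - E) else v x)))
      = (\<Sum>x\<in>{x\<in>S. x - E \<in> S}. cnj (u x) * (v x - v (x - E)))"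
    using fin by (simp add: sum.inter_filter) (rule sum.cong, auto)
  also have "\<dots> = (\<Sum>w\<in>{w\<in>S. w + E \<in> S}. cnj (u (w + E)) * (v (w + E) - v w))"
    by (rule sum.reindex_bij_witness[of _ "\<lambda>w. w + E" "\<lambda>x. x - E"]) auto
  finally have s2': "(\<Sum>x\<in>S. cnj (u x) * (v x - (if x - E \<in> S then v (x - E) else v x)))
      = (\<Sum>w\<in>{w\<in>S. w + E \<in> S}. cnj (u (w + E)) * (v (w + E) - v w))" .
  have "(\<Sum>x\<in>S. cnj (u x) * ((v x - (if x + E \<in> S then v (x + E) else v x)) + (v x - (if x - E \<in> S then v (x - E) else v x))))
     = (\<Sum>x\<in>S. cnj (u x) * (v x - (if x + E \<in> S then v (x + E) else v x)))
       + (\<Sum>x\<in>S. cnj (u x) * (v x - (if x - E \<in> S then v (x - E) else v x)))"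
    by (simp only: distrib_left sum.distrib)
  also have "\<dots> = (\<Sum>w\<in>{w\<in>S. w + E \<in> S}. cnj (u w) * (v w - v (w + E)) + cnj (u (w + E)) * (v (w + E) - v w))"
    unfolding s1 s2' by (simp add: sum.distrib)
  also have "\<dots> = (\<Sum>w\<in>{w\<in>S. w + E \<in> S}. cnj (u (w + E) - u w) * (v (w + E) - v w))"
    by (rule sum.cong) (auto simp: algebra_simps)
  finally show ?thesis .
qed

lemma ip_nlap:
  fixes u v :: "real^'d \<Rightarrow> complex"
  assumes fin: "finite S"
  shows "ip e S u (\<lambda>x. - nlap e S v x) = complex_of_real (e ^ CARD('d)) * (complex_of_real (1 / e^2) * (\<Sum>\<mu>\<in>UNIV. bsum e S \<mu> u v))"
proof -
  have "ip e S u (\<lambda>x. - nlap e S v x) = complex_of_real (e ^ CARD('d)) * (\<Sum>x\<in>S. cnj (u x) *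
     (complex_of_real (1/e^2) * (\<Sum>\<mu>\<in>UNIV. - dterm e S v x \<mu>)))"
    unfolding ip_def nlap_alt2 by (simp only: sum_negf mult_minus_right)
  also have "(\<Sum>x\<in>S. cnj (u x) * (complex_of_real (1/e^2) * (\<Sum>\<mu>\<in>UNIV. - dterm e S v x \<mu>)))
     = complex_of_real (1/e^2) * (\<Sum>\<mu>\<in>UNIV. \<Sum>x\<in>S. cnj (u x) * (- dterm e S v x \<mu>))"
    by (simp only: sum_distrib_left sum.swap[of _ S] mult.left_commute)
  also have "(\<Sum>\<mu>\<in>UNIV. \<Sum>x\<in>S. cnj (u x) * (- dterm e S v x \<mu>)) = (\<Sum>\<mu>\<in>UNIV. bsum e S \<mu> u v)"
    unfolding bsum_def neg_dterm by (simp only: bond_lemma[OF fin])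
  finally show ?thesis .
qed

lemma bsum_cnj: "cnj (bsum e S \<mu> v u) = bsum e S \<mu> u v"
  unfolding bsum_def by (simp add: mult.commute)

lemma bsum_self: "bsum e S \<mu> u u = complex_of_real (\<Sum>w\<in>{w\<in>S. w + e *\<^sub>R axis \<mu> 1 \<in> S}. (cmod (u (w + e *\<^sub>R axis \<mu> 1) - u w))^2)"
  unfolding bsum_def of_real_sum by (rule sum.cong) (simp_all only: complex_norm_square mult.commute)

definition vfloor :: "real^'d \<Rightarrow> real^'d" where
  "vfloor x = (\<chi> \<mu>. of_int \<lfloor>x$\<mu>\<rfloor>)"

definition cfl :: "nat \<Rightarrow> real^'d \<Rightarrow> real^'d" where
  "cfl L y = real L *\<^sub>R vfloor (inverse (real L) *\<^sub>R y)"

definition pt :: "real \<Rightarrow> ('d \<Rightarrow> nat) \<Rightarrow> real^'d" where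
  "pt e n = (\<chi> \<mu>. e * real (n \<mu>))"

lemma lat_pt: "x \<in> lat e N \<longleftrightarrow> (\<exists>n. (\<forall>\<mu>. n \<mu> < N) \<and> x = pt e n)"
proof
  assume "x \<in> lat e N"
  hence "\<forall>\<mu>. \<exists>n. n < N \<and> x$\<mu> = e * real n" by (simp add: lat_def)
  then obtain n where "\<forall>\<mu>. n \<mu> < N \<and> x$\<mu> = e * real (n \<mu>)" by metis
  thus "\<exists>n. (\<forall>\<mu>. n \<mu> < N) \<and> x = pt e n" by (auto simp: pt_def vec_eq_iff)
next
  assume "\<exists>n. (\<forall>\<mu>. n \<mu> < N) \<and> x = pt e n"
  thus "x \<in> lat e N" by (auto simp: pt_def lat_def)
qed

lemma lat_finite: "finite (lat e N :: (real^'d) set)"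
proof -
  have "lat e N \<subseteq> pt e ` (Pi\<^sub>E UNIV (\<lambda>_. {..<N}))"
  proof
    fix x assume "x \<in> lat e N"
    then obtain n where n: "\<forall>\<mu>. n \<mu> < N" "x = pt e n" by (auto simp: lat_pt)
    hence "n \<in> Pi\<^sub>E UNIV (\<lambda>_. {..<N})" by (simp add: PiE_iff)
    thus "x \<in> pt e ` (Pi\<^sub>E UNIV (\<lambda>_. {..<N}))" using n by blast
  qed
  moreover have "finite (pt e ` (Pi\<^sub>E (UNIV::'d set) (\<lambda>_. {..<N})))"
    by (intro finite_imageI finite_PiE) auto
  ultimately show ?thesis by (rule finite_subset)
qed

lemma lat_0: "N > 0 \<Longrightarrow> 0 \<in> lat e N"
  by (auto simp: lat_def intro: exI[of _ 0])

lemma lat_connected: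
  fixes u :: "real^'d \<Rightarrow> complex"
  assumes N: "N > 0"
    and bond: "\<And>w \<mu>. w \<in> lat e N \<Longrightarrow> w + e *\<^sub>R axis \<mu> 1 \<in> lat e N \<Longrightarrow> u (w + e *\<^sub>R axis \<mu> 1) = u w"
  shows "x \<in> lat e N \<Longrightarrow> u x = u 0"
proof -
  have main: "\<forall>n. (\<forall>\<mu>. n \<mu> < N) \<longrightarrow> (\<Sum>\<mu>\<in>UNIV. n \<mu>) = s \<longrightarrow> u (pt e n) = u 0" for s
  proof (induction s)
    case 0
    show ?case
    proof (intro allI impI)
      fix n :: "'d \<Rightarrow> nat" assume "(\<Sum>\<mu>\<in>UNIV. n \<mu>) = 0"
      hence "\<forall>\<mu>. n \<mu> = 0" by simp
      hence "pt e n = 0" by (simp add: pt_def vec_eq_iff)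
      thus "u (pt e n) = u 0" by simp
    qed
  next
    case (Suc s)
    show ?case
    proof (intro allI impI)
      fix n :: "'d \<Rightarrow> nat" assume nN: "\<forall>\<mu>. n \<mu> < N" and sn: "(\<Sum>\<mu>\<in>UNIV. n \<mu>) = Suc s"
      have "\<exists>\<mu>. n \<mu> > 0"
      proof (rule ccontr)
        assume "\<not> (\<exists>\<mu>. n \<mu> > 0)"
        hence "\<forall>\<mu>. n \<mu> = 0" by simp
        hence "(\<Sum>\<mu>\<in>UNIV. n \<mu>) = 0" by simp
        with sn show False by simp
      qed
      then obtain \<mu>0 where p: "n \<mu>0 > 0" by blast
      define n' where "n' = n(\<mu>0 := n \<mu>0 - 1)"
      have "(\<Sum>\<mu>\<in>UNIV. n \<mu>) = n \<mu>0 + (\<Sum>\<mu>\<in>UNIV - {\<mu>0}. n \<mu>)"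
        by (rule sum.remove) simp_all
      moreover have "(\<Sum>\<mu>\<in>UNIV. n' \<mu>) = n' \<mu>0 + (\<Sum>\<mu>\<in>UNIV - {\<mu>0}. n' \<mu>)"
        by (rule sum.remove) simp_all
      moreover have "(\<Sum>\<mu>\<in>UNIV - {\<mu>0}. n' \<mu>) = (\<Sum>\<mu>\<in>UNIV - {\<mu>0}. n \<mu>)"
        by (rule sum.cong) (auto simp: n'_def)
      moreover have "n' \<mu>0 = n \<mu>0 - 1" by (simp add: n'_def)
      ultimately have s': "(\<Sum>\<mu>\<in>UNIV. n' \<mu>) = s" using sn p by linarith
      have n'N: "\<forall>\<mu>. n' \<mu> < N" using nN by (simp add: n'_def less_imp_diff_less)
      have IH: "u (pt e n') = u 0" using Suc.IH n'N s' by blast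
      have eq: "pt e n = pt e n' + e *\<^sub>R axis \<mu>0 1"
        unfolding vec_eq_iff
      proof
        fix \<mu>
        show "pt e n $ \<mu> = (pt e n' + e *\<^sub>R axis \<mu>0 1) $ \<mu>"
        proof (cases "\<mu> = \<mu>0")
          case True
          have "real (n \<mu>0) = real (n \<mu>0 - 1) + 1" using p by (simp add: of_nat_diff)
          hence "e * real (n \<mu>0) = e * real (n \<mu>0 - 1) + e" by (metis distrib_left mult.right_neutral)
          thus ?thesis using True by (simp add: pt_def n'_def axis_def)
        next
          case False
          thus ?thesis by (simp add: pt_def n'_def axis_def)
        qed
      qed
      have "pt e n' \<in> lat e N" "pt e n \<in> lat e N" using nN n'N by (auto simp: lat_pt)
      hence "u (pt e n' + e *\<^sub>R axis \<mu>0 1) = u (pt e n')" using eq by (intro bond) simp_all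
      hence "u (pt e n) = u (pt e n')" using eq by simp
      thus "u (pt e n) = u 0" using IH by simp
    qed
  qed
  assume "x \<in> lat e N"
  then obtain n where "\<forall>\<mu>. n \<mu> < N" "x = pt e n" by (auto simp: lat_pt)
  thus "u x = u 0" using main by blast
qed

locale Lsetup =
  fixes L :: nat
  assumes L1: "L > 1"
begin

lemma Lpos: "real L > 0" using L1 by simp

lemma Lpow_pos: "0 < real L ^ j" using Lpos by simp

lemma coord_floor: "\<lfloor>real n / real L ^ j\<rfloor> = int (n div L ^ j)"
  by (metis floor_divide_of_nat_eq of_nat_power)

lemma div_lt_pow: "n < L ^ m \<Longrightarrow> j \<le> m \<Longrightarrow> n div L ^ j < L ^ (m - j)"
proof -
  assume a: "n < L ^ m" "j \<le> m"
  have "L ^ m = L ^ (m - j) * L ^ j" using a(2) by (metis le_add_diff_inverse2 power_add)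
  moreover have "0 < L ^ j" using L1 by simp
  ultimately show ?thesis using a(1) by (simp add: div_less_iff_less_mult)
qed

lemma vfloor_S: assumes "x \<in> OmJ L m j" "j \<le> m" shows "vfloor x \<in> OmJj L m j"
proof -
  { fix \<mu>
    obtain n where n: "n < L ^ m" "x$\<mu> = 1 / real L ^ j * real n" using assms(1) by (auto simp: OmJ_def lat_def)
    hence "\<exists>k<L ^ (m - j). vfloor x $ \<mu> = 1 * real k"
      using assms(2) by (intro exI[of _ "n div L^j"]) (simp add: vfloor_def coord_floor div_lt_pow)
  }
  thus ?thesis by (simp add: OmJj_def lat_def)
qed

end

lemma nat_div_eq_iff: "(0::nat) < L \<Longrightarrow> k div L = p \<longleftrightarrow> L * p \<le> k \<and> k < L * p + L"
  by (metis add.commute div_nat_eqI dividend_less_times_div mult_Suc_right times_div_less_eq_dividend)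

context Lsetup begin

lemma coord_floor': "\<lfloor>1 / real L ^ j * real n\<rfloor> = int (n div L ^ j)"
  using coord_floor by simp

lemma box_S:
  assumes y: "y \<in> OmJj L m j"
  shows "box (1 / real L ^ j) (real L ^ j) y \<inter> OmJ L m j = {z \<in> OmJ L m j. vfloor z = y}"
proof -
  have c: "(y$\<mu> \<le> z$\<mu> \<and> z$\<mu> < y$\<mu> + 1) \<longleftrightarrow> vfloor z $ \<mu> = y$\<mu>" for z \<mu>
  proof -
    obtain k where k: "y$\<mu> = real k" using y by (auto simp: OmJj_def lat_def)
    have "vfloor z $ \<mu> = y$\<mu> \<longleftrightarrow> \<lfloor>z$\<mu>\<rfloor> = int k"
      using of_int_eq_iff[of "\<lfloor>z$\<mu>\<rfloor>" "int k", where 'a=real] by (simp add: vfloor_def k)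
    also have "\<dots> \<longleftrightarrow> real k \<le> z$\<mu> \<and> z$\<mu> < real k + 1" by (simp add: floor_eq_iff)
    finally show ?thesis by (simp add: k)
  qed
  have g: "z \<in> OmJ L m j \<Longrightarrow> \<exists>i::int. z$\<mu> = 1 / real L ^ j * of_int i" for z \<mu>
    by (auto simp: OmJ_def lat_def) (metis of_int_of_nat_eq)
  have one: "real L ^ j * (1 / real L ^ j) = 1" using Lpow_pos by simp
  show ?thesis
    unfolding box_def one using c g by (auto simp: vec_eq_iff)
qed

lemma cfl_T:
  assumes y: "y \<in> OmJj L m j" and j: "j < m"
  shows "cfl L y \<in> OmJj1 L m j"
proof -
  { fix \<mu>
    obtain k where k: "k < L ^ (m - j)" "y$\<mu> = 1 * real k" using y by (auto simp: OmJj_def lat_def)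
    have fl: "\<lfloor>inverse (real L) * real k\<rfloor> = int (k div L)"
      using coord_floor[of k 1] by (simp add: divide_inverse mult.commute)
    have "k div L ^ 1 < L ^ (m - j - 1)" using div_lt_pow[of k "m - j" 1] k j by simp
    hence "\<exists>p<L ^ (m - j - 1). cfl L y $ \<mu> = real L * real p"
      using k fl by (intro exI[of _ "k div L"]) (simp add: cfl_def vfloor_def)
  }
  thus ?thesis by (simp add: OmJj1_def lat_def)
qed

lemma box_T:
  assumes Y: "Y \<in> OmJj1 L m j"
  shows "box 1 (real L) Y \<inter> OmJj L m j = {y \<in> OmJj L m j. cfl L y = Y}"
proof -
  have c: "cfl L y $ \<mu> = Y$\<mu> \<longleftrightarrow> (Y$\<mu> \<le> y$\<mu> \<and> y$\<mu> < Y$\<mu> + real L)" if yT: "y \<in> OmJj L m j" for y \<mu>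
  proof -
    obtain p where p: "Y$\<mu> = real L * real p" using Y by (auto simp: OmJj1_def lat_def)
    obtain k where k: "y$\<mu> = real k" using yT by (auto simp: OmJj_def lat_def)
    have fl: "\<lfloor>inverse (real L) * real k\<rfloor> = int (k div L)"
      using coord_floor[of k 1] by (simp add: divide_inverse mult.commute)
    have "cfl L y $ \<mu> = real L * real (k div L)" by (simp add: cfl_def vfloor_def k fl)
    hence "cfl L y $ \<mu> = Y$\<mu> \<longleftrightarrow> k div L = p" using p Lpos by simp
    also have "\<dots> \<longleftrightarrow> L * p \<le> k \<and> k < L * p + L" using nat_div_eq_iff L1 by simp
    also have "\<dots> \<longleftrightarrow> real L * real p \<le> real k \<and> real k < real L * real p + real L"
      by (metis of_nat_add of_nat_le_iff of_nat_less_iff of_nat_mult)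
    finally show ?thesis using p k by simp
  qed
  have g: "y \<in> OmJj L m j \<Longrightarrow> \<exists>i::int. y$\<mu> = 1 * of_int i" for y \<mu>
    by (auto simp: OmJj_def lat_def) (metis of_int_of_nat_eq)
  show ?thesis
    unfolding box_def using g by (auto simp: vec_eq_iff c)
qed

lemma lat_scale: "x \<in> OmJ L m (Suc j) \<longleftrightarrow> real L *\<^sub>R x \<in> OmJ L m j"
proof -
  have "(x$\<mu> = 1 / real L ^ Suc j * real n) \<longleftrightarrow> (real L * x$\<mu> = 1 / real L ^ j * real n)" for \<mu> n
    using Lpos by (auto simp: field_simps)
  thus ?thesis by (simp add: OmJ_def lat_def)
qed

lemma cfl_vfloor_S:
  assumes z: "z \<in> OmJ L m j"
  shows "cfl L (vfloor z) = real L *\<^sub>R vfloor (inverse (real L) *\<^sub>R z)"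
proof -
  { fix \<mu>
    obtain n where n: "z$\<mu> = 1 / real L ^ j * real n" using z by (auto simp: OmJ_def lat_def)
    have a: "\<lfloor>z$\<mu>\<rfloor> = int (n div L ^ j)" using n coord_floor' by simp
    have b: "\<lfloor>inverse (real L) * real (n div L ^ j)\<rfloor> = int (n div L ^ j div L)"
      using coord_floor[of "n div L ^ j" 1] by (simp add: divide_inverse mult.commute)
    have "inverse (real L) * z$\<mu> = 1 / real L ^ Suc j * real n" using n by (simp add: field_simps)
    hence c: "\<lfloor>inverse (real L) * z$\<mu>\<rfloor> = int (n div L ^ Suc j)" using coord_floor[of n "Suc j"] by simp
    have "n div L ^ j div L = n div L ^ Suc j" by (metis div_mult2_eq power_Suc2)
    hence "cfl L (vfloor z) $ \<mu> = (real L *\<^sub>R vfloor (inverse (real L) *\<^sub>R z)) $ \<mu>"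
      using a b c by (simp add: cfl_def vfloor_def)
  }
  thus ?thesis by (simp add: vec_eq_iff)
qed

lemma cfl_vfloor_scale:
  assumes x: "x \<in> OmJ L m (Suc j)"
  shows "cfl L (vfloor (real L *\<^sub>R x)) = real L *\<^sub>R vfloor x"
proof -
  have "real L *\<^sub>R x \<in> OmJ L m j" using x lat_scale by blast
  from cfl_vfloor_S[OF this] show ?thesis using Lpos by simp
qed

end

context Lsetup begin

lemma fiber_card:
  fixes Y :: "real^'d"
  assumes Y: "Y \<in> OmJj1 L m j" and j: "j < m"
  shows "card {y \<in> OmJj L m j. cfl L y = Y} = L ^ CARD('d)"
proof -
  obtain p where p: "\<forall>\<mu>. p \<mu> < L ^ (m - j - 1)" "Y = pt (real L) p"
    using Y by (auto simp: OmJj1_def lat_pt)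
  define g where "g t = Y + (\<chi> \<mu>. real (t \<mu>))" for t :: "'d \<Rightarrow> nat"
  have bx: "y \<in> box 1 (real L) Y \<longleftrightarrow> (\<forall>\<mu>. Y$\<mu> \<le> y$\<mu> \<and> y$\<mu> < Y$\<mu> + real L)"
    if "y \<in> OmJj L m j" for y
  proof -
    have "\<forall>\<mu>. \<exists>i::int. y$\<mu> = 1 * of_int i" using that
      by (auto simp: OmJj_def lat_def) (metis of_int_of_nat_eq)
    thus ?thesis by (simp add: box_def)
  qed
  have F: "{y \<in> OmJj L m j. cfl L y = Y} = g ` (Pi\<^sub>E UNIV (\<lambda>_. {..<L}))"
  proof
    show "{y \<in> OmJj L m j. cfl L y = Y} \<subseteq> g ` (Pi\<^sub>E UNIV (\<lambda>_. {..<L}))"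
    proof
      fix y assume "y \<in> {y \<in> OmJj L m j. cfl L y = Y}"
      hence yT: "y \<in> OmJj L m j" and yb: "y \<in> box 1 (real L) Y" using box_T[OF Y] by auto
      obtain k where k: "\<forall>\<mu>. k \<mu> < L ^ (m - j)" "y = pt 1 k" using yT by (auto simp: OmJj_def lat_pt)
      have ineq: "L * p \<mu> \<le> k \<mu> \<and> k \<mu> < L * p \<mu> + L" for \<mu>
      proof -
        have "Y$\<mu> \<le> y$\<mu> \<and> y$\<mu> < Y$\<mu> + real L" using bx[OF yT] yb by blast
        hence "real (L * p \<mu>) \<le> real (k \<mu>) \<and> real (k \<mu>) < real (L * p \<mu> + L)"
          using k p by (simp add: pt_def)
        thus ?thesis by (simp only: of_nat_le_iff of_nat_less_iff)
      qed
      define t where "t \<mu> = k \<mu> - L * p \<mu>" for \<mu>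
      have "t \<mu> < L" for \<mu> using ineq[of \<mu>] unfolding t_def by linarith
      hence "t \<in> Pi\<^sub>E UNIV (\<lambda>_. {..<L})" by (auto simp: PiE_iff)
      moreover have "y = g t"
        using ineq by (auto simp: vec_eq_iff g_def t_def k p pt_def of_nat_diff)
      ultimately show "y \<in> g ` (Pi\<^sub>E UNIV (\<lambda>_. {..<L}))" by blast
    qed
  next
    show "g ` (Pi\<^sub>E UNIV (\<lambda>_. {..<L})) \<subseteq> {y \<in> OmJj L m j. cfl L y = Y}"
    proof
      fix y assume "y \<in> g ` (Pi\<^sub>E UNIV (\<lambda>_. {..<L}))"
      then obtain t where t: "\<forall>\<mu>. t \<mu> < L" "y = g t" by (auto simp: PiE_iff)
      have "L * p \<mu> + t \<mu> < L ^ (m - j)" for \<mu>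
      proof -
        have "L * p \<mu> + t \<mu> < L * p \<mu> + L" using t by simp
        also have "\<dots> = L * (p \<mu> + 1)" by simp
        also have "\<dots> \<le> L * L ^ (m - j - 1)" using p(1) by (intro mult_le_mono2) (simp add: Suc_le_eq)
        also have "\<dots> = L ^ (m - j)" using j by (metis Suc_diff_Suc diff_Suc_1 power_Suc)
        finally show ?thesis .
      qed
      hence yT: "y \<in> OmJj L m j"
        unfolding OmJj_def lat_pt using t p
        by (intro exI[of _ "\<lambda>\<mu>. L * p \<mu> + t \<mu>"]) (auto simp: vec_eq_iff g_def pt_def)
      have "y \<in> box 1 (real L) Y" unfolding bx[OF yT] using t by (auto simp: g_def)
      thus "y \<in> {y \<in> OmJj L m j. cfl L y = Y}" using box_T[OF Y] yT by auto
    qed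
  qed
  have "inj_on g (Pi\<^sub>E UNIV (\<lambda>_. {..<L}))"
    by (auto simp: inj_on_def g_def vec_eq_iff fun_eq_iff)
  hence "card (g ` (Pi\<^sub>E UNIV (\<lambda>_. {..<L}))) = card (Pi\<^sub>E (UNIV::'d set) (\<lambda>_. {..<L}))"
    by (rule card_image)
  also have "\<dots> = L ^ CARD('d)" by (simp add: card_PiE)
  finally show ?thesis using F by simp
qed

end

lemma ip_add2: "ip e S u (\<lambda>x. f x + g x) = ip e S u f + ip e S u g"
  by (simp add: ip_def distrib_left sum.distrib)
lemma ip_scale2: "ip e S u (\<lambda>x. c * f x) = c * ip e S u f"
  by (simp add: ip_def sum_distrib_left mult.left_commute)
lemma ip_add1: "ip e S (\<lambda>x. f x + g x) w = ip e S f w + ip e S g w"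
  by (simp add: ip_def distrib_right sum.distrib distrib_left)
lemma ip_scale1: "ip e S (\<lambda>x. c * f x) w = cnj c * ip e S f w"
  by (simp add: ip_def sum_distrib_left mult.left_commute mult.assoc)

context Lsetup begin

lemma S_fin: "finite (OmJ L m j)" by (simp add: OmJ_def lat_finite)
lemma T_fin: "finite (OmJj L m j)" by (simp add: OmJj_def lat_finite)
lemma U_fin: "finite (OmJj1 L m j)" by (simp add: OmJj1_def lat_finite)
lemma S_0: "0 \<in> OmJ L m j" using L1 by (simp add: OmJ_def lat_0)
lemma T_0: "0 \<in> OmJj L m j" using L1 by (simp add: OmJj_def lat_0)

lemma QJ_expl:
  fixes u :: "real^'d \<Rightarrow> complex"
  assumes "y \<in> OmJj L m j"
  shows "QJ L m j u y = complex_of_real (1 / (real L ^ j) ^ CARD('d)) * (\<Sum>z\<in>{z \<in> OmJ L m j. vfloor z = y}. u z)"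
  unfolding QJ_def avg_def box_S[OF assms] ..

lemma QJs_expl:
  assumes "j \<le> m"
  shows "QJs L m j g = (\<lambda>x. if x \<in> OmJ L m j then g (vfloor x) else 0)"
  unfolding QJs_def
  by (rule blk_adj[OF _ S_fin T_fin _ QJ_expl]) (use assms vfloor_S Lpos in \<open>auto simp: power_one_over\<close>)

lemma QJ_adj:
  assumes "j \<le> m"
  shows "ip 1 (OmJj L m j) (QJ L m j u) g = ip (1 / real L ^ j) (OmJ L m j) u (QJs L m j g)"
  unfolding QJs_expl[OF assms]
  by (rule blk_adj_prop[OF S_fin T_fin _ QJ_expl]) (use assms vfloor_S in \<open>auto simp: power_one_over\<close>)

lemma Q1_expl:
  fixes u :: "real^'d \<Rightarrow> complex"
  assumes "Y \<in> OmJj1 L m j"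
  shows "Q1 L m j u Y = complex_of_real (1 / real L ^ CARD('d)) * (\<Sum>y\<in>{y \<in> OmJj L m j. cfl L y = Y}. u y)"
  unfolding Q1_def avg_def box_T[OF assms] ..

lemma Q1s_expl:
  assumes "j < m"
  shows "Q1s L m j g = (\<lambda>y. if y \<in> OmJj L m j then g (cfl L y) else 0)"
  unfolding Q1s_def
  by (rule blk_adj[OF _ T_fin U_fin _ Q1_expl]) (use assms cfl_T Lpos in auto)

lemma Q1_adj:
  assumes "j < m"
  shows "ip (real L) (OmJj1 L m j) (Q1 L m j u) g = ip 1 (OmJj L m j) u (Q1s L m j g)"
  unfolding Q1s_expl[OF assms]
  by (rule blk_adj_prop[OF T_fin U_fin _ Q1_expl]) (use assms cfl_T Lpos in auto)

lemma Q1_Q1s: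
  fixes g :: "real^'d \<Rightarrow> complex"
  assumes Y: "Y \<in> OmJj1 L m j" and j: "j < m"
  shows "Q1 L m j (Q1s L m j g) Y = g Y"
proof -
  have "Q1 L m j (Q1s L m j g) Y = complex_of_real (1 / real L ^ CARD('d)) * (\<Sum>y\<in>{y \<in> OmJj L m j. cfl L y = Y}. g Y)"
    apply (subst Q1_expl[OF Y])
    apply (intro arg_cong2[where f="(*)"] sum.cong)
    apply (auto simp: Q1s_expl[OF j])
    done
  also have "\<dots> = g Y" using fiber_card[OF Y j] Lpos by simp
  finally show ?thesis .
qed

end

locale Mset = Lsetup +
  fixes m :: nat and a mu0 :: real
  assumes apos: "a > 0" and mu0nn: "mu0 \<ge> 0"
begin

definition Aop :: "nat \<Rightarrow> (real^'d \<Rightarrow> complex) \<Rightarrow> real^'d \<Rightarrow> complex" where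
  "Aop j u x = - nlap (1 / real L ^ j) (OmJ L m j) u x + complex_of_real (mubar mu0 L j) * u x
            + complex_of_real (aj a L j) * QJs L m j (QJ L m j u) x"

lemma Gop_A: "Gop L m a mu0 j = opinv (OmJ L m j) (Aop j)"
  unfolding Gop_def Aop_def[abs_def] ..

lemma aj_pos: assumes "j \<ge> 1" shows "aj a L j > 0"
proof -
  have L2: "real L ^ 2 > 1" using L1 by simp
  have "real L ^ (2 * j) > 1" using L1 assms by (simp add: one_less_power)
  hence "1 - 1 / real L ^ (2 * j) > 0" by (simp add: divide_less_eq)
  moreover have "1 - 1 / real L ^ 2 > 0" using L2 by (simp add: divide_less_eq)
  ultimately show ?thesis using apos by (simp add: aj_def)
qed

lemma mubar_nn: "mubar mu0 L j \<ge> 0" using mu0nn by (simp add: mubar_def)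

lemma QJsQJ_at:
  fixes u :: "real^'d \<Rightarrow> complex"
  assumes "j \<le> m" "x \<in> OmJ L m j"
  shows "QJs L m j (QJ L m j u) x = complex_of_real (1 / (real L ^ j) ^ CARD('d)) * (\<Sum>z\<in>{z \<in> OmJ L m j. vfloor z = vfloor x}. u z)"
  using assms by (simp add: QJs_expl QJ_expl vfloor_S)

lemma Aop_add:
  assumes "j \<le> m" "x \<in> OmJ L m j"
  shows "Aop j (\<lambda>z. u z + v z) x = Aop j u x + Aop j v x"
  unfolding Aop_def nlap_add QJsQJ_at[OF assms] by (simp add: sum.distrib algebra_simps)

lemma Aop_scale:
  assumes "j \<le> m" "x \<in> OmJ L m j"
  shows "Aop j (\<lambda>z. c * u z) x = c * Aop j u x"
  unfolding Aop_def nlap_scale QJsQJ_at[OF assms] by (simp add: sum_distrib_left algebra_simps)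

lemma Aop_linop: "j \<le> m \<Longrightarrow> linop (OmJ L m j) (Aop j)"
  unfolding linop_def using Aop_add Aop_scale by blast

lemma Aop_ip:
  assumes "j \<le> m"
  shows "ip (1 / real L ^ j) (OmJ L m j) u (Aop j v)
    = ip (1 / real L ^ j) (OmJ L m j) u (\<lambda>x. - nlap (1 / real L ^ j) (OmJ L m j) v x)
      + complex_of_real (mubar mu0 L j) * ip (1 / real L ^ j) (OmJ L m j) u v
      + complex_of_real (aj a L j) * ip 1 (OmJj L m j) (QJ L m j u) (QJ L m j v)"
  unfolding Aop_def[abs_def] ip_add2 ip_scale2 QJ_adj[OF assms] ..

lemma Aop_sym:
  assumes "j \<le> m"
  shows "ip (1 / real L ^ j) (OmJ L m j) u (Aop j v) = cnj (ip (1 / real L ^ j) (OmJ L m j) v (Aop j u))"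
  unfolding Aop_ip[OF assms] ip_nlap[OF S_fin]
  by (simp add: cnj_sum bsum_cnj ip_cnj)

lemma Aop_inj:
  assumes j: "1 \<le> j" "j \<le> m"
  shows "injop (OmJ L m j) (Aop j)"
  unfolding injop_def
proof (intro ballI impI)
  fix u :: "real^'d \<Rightarrow> complex"
  assume uV: "u \<in> Vsp (OmJ L m j)" and z: "\<forall>y\<in>OmJ L m j. Aop j u y = 0"
  define e where "e = 1 / real L ^ j"
  have epos: "e > 0" using Lpos by (simp add: e_def)
  define X1 where "X1 = (\<Sum>\<mu>\<in>UNIV. \<Sum>w\<in>{w\<in>OmJ L m j. w + e *\<^sub>R axis \<mu> 1 \<in> OmJ L m j}.
       (cmod (u (w + e *\<^sub>R axis \<mu> 1) - u w))^2)"
  define X2 where "X2 = (\<Sum>x\<in>OmJ L m j. (cmod (u x))^2)"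
  define X3 where "X3 = (\<Sum>y\<in>OmJj L m j. (cmod (QJ L m j u y))^2)"
  have e1: "ip e (OmJ L m j) u (Aop j u) = 0" using z by (simp add: ip_def e_def)
  have e2: "ip e (OmJ L m j) u (Aop j u) = complex_of_real
     (e ^ CARD('d) * (1 / e^2) * X1 + mubar mu0 L j * (e ^ CARD('d) * X2) + aj a L j * X3)"
    unfolding e_def Aop_ip[OF j(2)] ip_nlap[OF S_fin] bsum_self ip_self X1_def X2_def X3_def
    by (simp add: of_real_sum)
  have eq: "e ^ CARD('d) * (1 / e^2) * X1 + mubar mu0 L j * (e ^ CARD('d) * X2) + aj a L j * X3 = 0"
    using e1 unfolding e2 of_real_eq_0_iff .
  have n1: "X1 \<ge> 0" "X2 \<ge> 0" "X3 \<ge> 0" unfolding X1_def X2_def X3_def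
    by (auto intro!: sum_nonneg)
  have p1: "e ^ CARD('d) * (1 / e^2) > 0" using epos by simp
  have "mubar mu0 L j * (e ^ CARD('d) * X2) \<ge> 0" using mubar_nn n1 epos by simp
  moreover have "aj a L j * X3 \<ge> 0" using aj_pos[OF j(1)] n1 by simp
  moreover have "e ^ CARD('d) * (1 / e^2) * X1 \<ge> 0" using epos n1 by (intro mult_nonneg_nonneg) auto
  ultimately have "e ^ CARD('d) * (1 / e^2) * X1 = 0" "aj a L j * X3 = 0" using eq by linarith+
  hence X1z: "X1 = 0" and X3z: "X3 = 0" using p1 aj_pos[OF j(1)] by auto
  have bond: "u (w + e *\<^sub>R axis \<mu> 1) = u w"
    if "w \<in> OmJ L m j" "w + e *\<^sub>R axis \<mu> 1 \<in> OmJ L m j" for w \<mu>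
  proof -
    have "\<forall>\<mu>\<in>UNIV. (\<Sum>w\<in>{w\<in>OmJ L m j. w + e *\<^sub>R axis \<mu> 1 \<in> OmJ L m j}.
       (cmod (u (w + e *\<^sub>R axis \<mu> 1) - u w))^2) = 0"
      using X1z unfolding X1_def by (subst (asm) sum_nonneg_eq_0_iff) (auto intro!: sum_nonneg)
    hence "(\<Sum>w\<in>{w\<in>OmJ L m j. w + e *\<^sub>R axis \<mu> 1 \<in> OmJ L m j}.
       (cmod (u (w + e *\<^sub>R axis \<mu> 1) - u w))^2) = 0" by blast
    hence "\<forall>w\<in>{w\<in>OmJ L m j. w + e *\<^sub>R axis \<mu> 1 \<in> OmJ L m j}. (cmod (u (w + e *\<^sub>R axis \<mu> 1) - u w))^2 = 0"
      by (subst (asm) sum_nonneg_eq_0_iff) (auto simp: S_fin)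
    thus ?thesis using that by auto
  qed
  have const: "u x = u 0" if "x \<in> OmJ L m j" for x
    using lat_connected[of "L ^ m" e u x] bond that L1 by (auto simp: OmJ_def e_def)
  have "\<forall>y\<in>OmJj L m j. (cmod (QJ L m j u y))^2 = 0"
    using X3z unfolding X3_def by (subst (asm) sum_nonneg_eq_0_iff) (auto simp: T_fin)
  hence "QJ L m j u 0 = 0" using T_0 by auto
  moreover have "QJ L m j u 0 = complex_of_real (1 / (real L ^ j) ^ CARD('d)) *
     (of_nat (card {z \<in> OmJ L m j. vfloor z = (0::real^'d)}) * u 0)"
  proof -
    have "(\<Sum>z\<in>{z \<in> OmJ L m j. vfloor z = (0::real^'d)}. u z) = (\<Sum>z\<in>{z \<in> OmJ L m j. vfloor z = (0::real^'d)}. u 0)"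
      by (rule sum.cong) (auto simp: const)
    thus ?thesis unfolding QJ_expl[OF T_0] by simp
  qed
  moreover have "card {z \<in> OmJ L m j. vfloor z = (0::real^'d)} > 0"
  proof -
    have "(0::real^'d) \<in> {z \<in> OmJ L m j. vfloor z = (0::real^'d)}" using S_0 by (simp add: vfloor_def vec_eq_iff)
    moreover have "finite {z \<in> OmJ L m j. vfloor z = (0::real^'d)}"
      by (rule finite_subset[of _ "OmJ L m j"]) (auto simp: S_fin)
    ultimately show ?thesis by (subst card_gt_0_iff) blast
  qed
  ultimately have "u 0 = 0" using Lpos by simp
  thus "u = (\<lambda>_. 0)" using const uV by (auto simp: Vsp_def fun_eq_iff)
qed

lemma G_sol:
  assumes j: "1 \<le> j" "j \<le> m"
  shows "Gop L m a mu0 j f \<in> Vsp (OmJ L m j) \<and> (\<forall>x\<in>OmJ L m j. Aop j (Gop L m a mu0 j f) x = f x)"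
  unfolding Gop_A by (rule opinv_sol[OF S_fin Aop_linop[OF j(2)] Aop_inj[OF j]])

lemma G_unique:
  assumes j: "1 \<le> j" "j \<le> m" and h: "h \<in> Vsp (OmJ L m j)" and eq: "\<And>x. x \<in> OmJ L m j \<Longrightarrow> Aop j h x = f x"
  shows "Gop L m a mu0 j f = h"
  unfolding Gop_A by (rule opinv_unique[OF Aop_linop[OF j(2)] Aop_inj[OF j] h eq])

lemma G_add:
  assumes j: "1 \<le> j" "j \<le> m"
  shows "Gop L m a mu0 j (\<lambda>x. f x + g x) = (\<lambda>x. Gop L m a mu0 j f x + Gop L m a mu0 j g x)"
  using G_sol[OF j, of f] G_sol[OF j, of g]
  by (intro G_unique[OF j]) (auto simp: Vsp_def Aop_add[OF j(2)])

lemma G_scale: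
  assumes j: "1 \<le> j" "j \<le> m"
  shows "Gop L m a mu0 j (\<lambda>x. c * f x) = (\<lambda>x. c * Gop L m a mu0 j f x)"
  using G_sol[OF j, of f]
  by (intro G_unique[OF j]) (auto simp: Vsp_def Aop_scale[OF j(2)])

lemma G_sym:
  assumes j: "1 \<le> j" "j \<le> m"
  shows "ip (1 / real L ^ j) (OmJ L m j) (Gop L m a mu0 j u) v = ip (1 / real L ^ j) (OmJ L m j) u (Gop L m a mu0 j v)"
proof -
  let ?e = "1 / real L ^ j" and ?S = "OmJ L m j" and ?G = "Gop L m a mu0 j"
  have "ip ?e ?S (?G u) v = ip ?e ?S (?G u) (Aop j (?G v))"
    using G_sol[OF j, of v] by (intro ip_cong) auto
  also have "\<dots> = cnj (ip ?e ?S (?G v) (Aop j (?G u)))" by (rule Aop_sym[OF j(2)])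
  also have "ip ?e ?S (?G v) (Aop j (?G u)) = ip ?e ?S (?G v) u"
    using G_sol[OF j, of u] by (intro ip_cong) auto
  finally show ?thesis by (simp add: ip_cnj)
qed

end

context Mset begin

lemma aj_rel:
  assumes j: "j \<ge> 1"
  shows "aj a L j * (a / real L ^ 2) / (aj a L j + a / real L ^ 2) = aj a L (Suc j) / real L ^ 2"
proof -
  define A where "A = real L ^ 2"
  define p where "p = real L ^ (2 * j)"
  have A1: "A > 1" using L1 by (simp add: A_def)
  have p1: "p > 1" using L1 j by (simp add: p_def one_less_power)
  have Ap: "real L ^ (2 * Suc j) = A * p" by (simp add: A_def p_def power_add[symmetric])
  have e1: "aj a L j = a * (A - 1) * p / (A * (p - 1))"
  proof -
    have "aj a L j = a * (1 - 1 / A) / (1 - 1 / p)" unfolding aj_def A_def p_def ..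
    thus ?thesis using A1 p1 by (simp add: field_simps)
  qed
  have Ap1: "A * p - 1 > 0" using A1 p1 by (smt (verit) mult_less_cancel_left1)
  have e2: "aj a L (Suc j) = a * (A - 1) * p / (A * p - 1)"
  proof -
    have "aj a L (Suc j) = a * (1 - 1 / A) / (1 - 1 / (A * p))" unfolding aj_def A_def Ap ..
    also have "1 - 1 / A = (A - 1) / A" using A1 by (simp add: field_simps)
    also have "1 - 1 / (A * p) = (A * p - 1) / (A * p)" using A1 p1 by (simp add: field_simps)
    also have "a * ((A - 1) / A) / ((A * p - 1) / (A * p)) = a * (A - 1) * p / (A * p - 1)"
      using A1 p1 Ap1 by (simp add: field_simps)
    finally show ?thesis .
  qed
  have s1: "a * (A - 1) * p / (A * (p - 1)) + a / A = a * (A * p - 1) / (A * (p - 1))"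
    using A1 p1 by (simp add: field_simps)
  have s2: "a * (A - 1) * p / (A * (p - 1)) * (a / A) = a * a * (A - 1) * p / (A * A * (p - 1))"
    using A1 p1 by (simp add: field_simps)
  have s3: "a * a * (A - 1) * p / (A * A * (p - 1)) / (a * (A * p - 1) / (A * (p - 1)))
      = a * (A - 1) * p / (A * p - 1) / A"
  proof -
    have nz: "p - 1 \<noteq> 0" "A * p - 1 \<noteq> 0" "A \<noteq> 0" "a \<noteq> 0" using A1 p1 Ap1 apos by auto
    have gen: "\<And>(a::real) A B q Q p. a \<noteq> 0 \<Longrightarrow> A \<noteq> 0 \<Longrightarrow> q \<noteq> 0 \<Longrightarrow> Q \<noteq> 0 \<Longrightarrow>
        a * a * B * p / (A * A * q) / (a * Q / (A * q)) = a * B * p / Q / A"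
      by (simp add: field_simps)
    show ?thesis using gen[of a A "p - 1" "A * p - 1" "A - 1" p] nz by simp
  qed
  show ?thesis unfolding A_def[symmetric] e1 e2 s1 s2 s3 ..
qed

lemma QJ_add:
  fixes u v :: "real^'d \<Rightarrow> complex"
  shows "y \<in> OmJj L m j \<Longrightarrow> QJ L m j (\<lambda>z. u z + v z) y = QJ L m j u y + QJ L m j v y"
  by (simp add: QJ_expl sum.distrib distrib_left)

lemma QJ_scale:
  fixes u :: "real^'d \<Rightarrow> complex"
  shows "y \<in> OmJj L m j \<Longrightarrow> QJ L m j (\<lambda>z. c * u z) y = c * QJ L m j u y"
  by (simp add: QJ_expl sum_distrib_left mult.left_commute)

lemma QJ_cong:
  fixes u v :: "real^'d \<Rightarrow> complex"
  shows "y \<in> OmJj L m j \<Longrightarrow> (\<And>z. z \<in> OmJ L m j \<Longrightarrow> u z = v z) \<Longrightarrow> QJ L m j u y = QJ L m j v y"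
  by (simp add: QJ_expl)

lemma Q1_add:
  fixes u v :: "real^'d \<Rightarrow> complex"
  shows "Y \<in> OmJj1 L m j \<Longrightarrow> Q1 L m j (\<lambda>z. u z + v z) Y = Q1 L m j u Y + Q1 L m j v Y"
  by (simp add: Q1_expl sum.distrib distrib_left)

lemma Q1_scale:
  fixes u :: "real^'d \<Rightarrow> complex"
  shows "Y \<in> OmJj1 L m j \<Longrightarrow> Q1 L m j (\<lambda>z. c * u z) Y = c * Q1 L m j u Y"
  by (simp add: Q1_expl sum_distrib_left mult.left_commute)

lemma Q1_cong:
  fixes u v :: "real^'d \<Rightarrow> complex"
  shows "Y \<in> OmJj1 L m j \<Longrightarrow> (\<And>z. z \<in> OmJj L m j \<Longrightarrow> u z = v z) \<Longrightarrow> Q1 L m j u Y = Q1 L m j v Y"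
  by (simp add: Q1_expl)

lemma QJs_add:
  fixes u v :: "real^'d \<Rightarrow> complex"
  shows "j \<le> m \<Longrightarrow> QJs L m j (\<lambda>z. u z + v z) = (\<lambda>x. QJs L m j u x + QJs L m j v x)"
  by (simp add: QJs_expl fun_eq_iff)

lemma QJs_scale:
  fixes u :: "real^'d \<Rightarrow> complex"
  shows "j \<le> m \<Longrightarrow> QJs L m j (\<lambda>z. c * u z) = (\<lambda>x. c * QJs L m j u x)"
  by (simp add: QJs_expl fun_eq_iff)

lemma Hs_expl:
  fixes g :: "real^'d \<Rightarrow> complex"
  assumes j: "1 \<le> j" "j \<le> m"
  shows "Hs L m a mu0 j g = (\<lambda>y. if y \<in> OmJj L m j then complex_of_real (aj a L j) * QJ L m j (Gop L m a mu0 j g) y else 0)"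
  unfolding Hs_def
proof (rule adj_unique)
  show "(1::real) > 0" by simp
  show "finite (OmJj L m j)" by (rule T_fin)
  show "(\<lambda>y. if y \<in> OmJj L m j then complex_of_real (aj a L j) * QJ L m j (Gop L m a mu0 j g) y else 0) \<in> Vsp (OmJj L m j)"
    by (simp add: Vsp_def)
  fix f :: "real^'d \<Rightarrow> complex"
  let ?e = "1 / real L ^ j" and ?S = "OmJ L m j" and ?T = "OmJj L m j" and ?G = "Gop L m a mu0 j"
  have "ip ?e ?S (Hop L m a mu0 j f) g = complex_of_real (aj a L j) * ip ?e ?S (?G (QJs L m j f)) g"
    unfolding Hop_def ip_scale1 by simp
  also have "ip ?e ?S (?G (QJs L m j f)) g = ip ?e ?S (QJs L m j f) (?G g)" by (rule G_sym[OF j])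
  also have "\<dots> = cnj (ip ?e ?S (?G g) (QJs L m j f))" by (simp add: ip_cnj)
  also have "ip ?e ?S (?G g) (QJs L m j f) = ip 1 ?T (QJ L m j (?G g)) f" by (rule QJ_adj[OF j(2), symmetric])
  also have "cnj (ip 1 ?T (QJ L m j (?G g)) f) = ip 1 ?T f (QJ L m j (?G g))" by (simp add: ip_cnj)
  also have "complex_of_real (aj a L j) * ip 1 ?T f (QJ L m j (?G g)) = ip 1 ?T f (\<lambda>y. complex_of_real (aj a L j) * QJ L m j (?G g) y)"
    by (simp add: ip_scale2)
  also have "\<dots> = ip 1 ?T f (\<lambda>y. if y \<in> ?T then complex_of_real (aj a L j) * QJ L m j (?G g) y else 0)"
    by (rule ip_cong) auto
  finally show "ip ?e ?S (Hop L m a mu0 j f) g = ip 1 ?T f (\<lambda>y. if y \<in> ?T then complex_of_real (aj a L j) * QJ L m j (?G g) y else 0)" .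
qed

definition Bop :: "nat \<Rightarrow> (real^'d \<Rightarrow> complex) \<Rightarrow> real^'d \<Rightarrow> complex" where
  "Bop j \<psi> y = complex_of_real (aj a L j) * \<psi> y
            - complex_of_real ((aj a L j)^2) * QJ L m j (Gop L m a mu0 j (QJs L m j \<psi>)) y
            + complex_of_real (a / real L ^ 2) * Q1s L m j (Q1 L m j \<psi>) y"

lemma Cop_B: "Cop L m a mu0 j = opinv (OmJj L m j) (Bop j)"
  unfolding Cop_def Bop_def[abs_def] ..

lemma Bop_linop:
  assumes j: "1 \<le> j" "j < m"
  shows "linop (OmJj L m j) (Bop j)"
proof -
  have jm: "j \<le> m" using j by simp
  have cT: "y \<in> OmJj L m j \<Longrightarrow> cfl L y \<in> OmJj1 L m j" for y :: "real^'d" using cfl_T j by blast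
  have P_add: "Q1s L m j (Q1 L m j (\<lambda>z. u z + v z)) y = Q1s L m j (Q1 L m j u) y + Q1s L m j (Q1 L m j v) y"
    if "y \<in> OmJj L m j" for u v :: "real^'d \<Rightarrow> complex" and y
    using that by (simp add: Q1s_expl[OF j(2)] Q1_add[OF cT])
  have P_scale: "Q1s L m j (Q1 L m j (\<lambda>z. c * u z)) y = c * Q1s L m j (Q1 L m j u) y"
    if "y \<in> OmJj L m j" for u :: "real^'d \<Rightarrow> complex" and y c
    using that by (simp add: Q1s_expl[OF j(2)] Q1_scale[OF cT])
  have G_add': "QJ L m j (Gop L m a mu0 j (QJs L m j (\<lambda>z. u z + v z))) y
     = QJ L m j (Gop L m a mu0 j (QJs L m j u)) y + QJ L m j (Gop L m a mu0 j (QJs L m j v)) y"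
    if "y \<in> OmJj L m j" for u v :: "real^'d \<Rightarrow> complex" and y
    using that by (simp add: QJs_add[OF jm] G_add[OF j(1) jm] QJ_add)
  have G_scale': "QJ L m j (Gop L m a mu0 j (QJs L m j (\<lambda>z. c * u z))) y
     = c * QJ L m j (Gop L m a mu0 j (QJs L m j u)) y"
    if "y \<in> OmJj L m j" for u :: "real^'d \<Rightarrow> complex" and y c
    using that by (simp add: QJs_scale[OF jm] G_scale[OF j(1) jm] QJ_scale)
  show ?thesis
    unfolding linop_def Bop_def
    by (auto simp: P_add P_scale G_add' G_scale' algebra_simps)
qed

end

lemma schur_alg:
  fixes c B P X Y psi :: complex
  assumes "c \<noteq> 0" "c * psi - c^2 * X + B * P = c * Y"
  shows "Y + c * X = psi + B / c * P"
proof -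
  have "c * (Y + c * X) = c * (psi + B / c * P)" using assms by (simp add: algebra_simps power2_eq_square)
  thus ?thesis using assms(1) by simp
qed

context Mset begin

lemma schur_Q:
  fixes f \<psi> :: "real^'d \<Rightarrow> complex"
  assumes j: "1 \<le> j" "j < m"
    and hB: "\<forall>y\<in>OmJj L m j. Bop j \<psi> y = complex_of_real (aj a L j) * QJ L m j (Gop L m a mu0 j f) y"
  shows "\<forall>y\<in>OmJj L m j. QJ L m j (\<lambda>z. Gop L m a mu0 j f z + complex_of_real (aj a L j) * Gop L m a mu0 j (QJs L m j \<psi>) z) y
     = \<psi> y + complex_of_real (a / real L ^ 2) / complex_of_real (aj a L j) * Q1s L m j (Q1 L m j \<psi>) y"
proof
  fix y :: "real^'d" assume y: "y \<in> OmJj L m j"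
  have cnz: "complex_of_real (aj a L j) \<noteq> 0" using aj_pos[OF j(1)] by simp
  have "QJ L m j (\<lambda>z. Gop L m a mu0 j f z + complex_of_real (aj a L j) * Gop L m a mu0 j (QJs L m j \<psi>) z) y
     = QJ L m j (Gop L m a mu0 j f) y + complex_of_real (aj a L j) * QJ L m j (Gop L m a mu0 j (QJs L m j \<psi>)) y"
    using y by (simp add: QJ_add QJ_scale)
  also have "\<dots> = \<psi> y + complex_of_real (a / real L ^ 2) / complex_of_real (aj a L j) * Q1s L m j (Q1 L m j \<psi>) y"
    by (rule schur_alg[OF cnz]) (use hB y in \<open>simp add: Bop_def\<close>)
  finally show "QJ L m j (\<lambda>z. Gop L m a mu0 j f z + complex_of_real (aj a L j) * Gop L m a mu0 j (QJs L m j \<psi>) z) y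
     = \<psi> y + complex_of_real (a / real L ^ 2) / complex_of_real (aj a L j) * Q1s L m j (Q1 L m j \<psi>) y" .
qed

lemma schur:
  fixes f \<psi> :: "real^'d \<Rightarrow> complex"
  assumes j: "1 \<le> j" "j < m"
    and hB: "\<forall>y\<in>OmJj L m j. Bop j \<psi> y = complex_of_real (aj a L j) * QJ L m j (Gop L m a mu0 j f) y"
  defines "\<phi>0 \<equiv> (\<lambda>z. Gop L m a mu0 j f z + complex_of_real (aj a L j) * Gop L m a mu0 j (QJs L m j \<psi>) z)"
  shows "\<forall>x\<in>OmJ L m j. - nlap (1 / real L ^ j) (OmJ L m j) \<phi>0 x + complex_of_real (mubar mu0 L j) * \<phi>0 x
     + complex_of_real (aj a L (Suc j) / real L ^ 2) * QJs L m j (Q1s L m j (Q1 L m j (QJ L m j \<phi>0))) x = f x"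
proof
  fix x :: "real^'d" assume x: "x \<in> OmJ L m j"
  have jm: "j \<le> m" using j by simp
  let ?c = "complex_of_real (aj a L j)" and ?B = "complex_of_real (a / real L ^ 2)"
  let ?G = "Gop L m a mu0 j" and ?W = "QJs L m j \<psi>" and ?P = "Q1s L m j (Q1 L m j \<psi>)"
  have cnz: "?c \<noteq> 0" using aj_pos[OF j(1)] by simp
  have vf: "vfloor x \<in> OmJj L m j" using vfloor_S[OF x jm] .
  have Y': "cfl L (vfloor x) \<in> OmJj1 L m j" using cfl_T[OF vf j(2)] .
  have hQ: "\<forall>y\<in>OmJj L m j. QJ L m j \<phi>0 y = \<psi> y + ?B / ?c * ?P y"
    unfolding \<phi>0_def by (rule schur_Q[OF j hB])
  have GV: "?G g \<in> Vsp (OmJ L m j)" for g using G_sol[OF j(1) jm] by blast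
  have hA: "Aop j \<phi>0 x = f x + ?c * ?W x"
  proof -
    have "Aop j \<phi>0 x = Aop j (?G f) x + Aop j (\<lambda>z. ?c * ?G ?W z) x"
      unfolding \<phi>0_def by (rule Aop_add[OF jm x])
    also have "Aop j (\<lambda>z. ?c * ?G ?W z) x = ?c * Aop j (?G ?W) x" by (rule Aop_scale[OF jm x])
    also have "Aop j (?G f) x = f x" using G_sol[OF j(1) jm] x by blast
    also have "Aop j (?G ?W) x = ?W x" using G_sol[OF j(1) jm] x by blast
    finally show ?thesis .
  qed
  have QJsQJ: "QJs L m j (QJ L m j \<phi>0) x = \<psi> (vfloor x) + ?B / ?c * ?P (vfloor x)"
    using hQ vf x by (simp add: QJs_expl[OF jm])
  have W: "?W x = \<psi> (vfloor x)" using x by (simp add: QJs_expl[OF jm])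
  have Pv: "?P (vfloor x) = Q1 L m j \<psi> (cfl L (vfloor x))" using vf by (simp add: Q1s_expl[OF j(2)])
  have Q1phi: "Q1 L m j (QJ L m j \<phi>0) (cfl L (vfloor x)) = (1 + ?B / ?c) * Q1 L m j \<psi> (cfl L (vfloor x))"
  proof -
    have "Q1 L m j (QJ L m j \<phi>0) (cfl L (vfloor x)) = Q1 L m j (\<lambda>y. \<psi> y + ?B / ?c * ?P y) (cfl L (vfloor x))"
      using hQ by (intro Q1_cong[OF Y']) auto
    also have "\<dots> = Q1 L m j \<psi> (cfl L (vfloor x)) + Q1 L m j (\<lambda>y. ?B / ?c * ?P y) (cfl L (vfloor x))"
      by (rule Q1_add[OF Y'])
    also have "Q1 L m j (\<lambda>y. ?B / ?c * ?P y) (cfl L (vfloor x)) = ?B / ?c * Q1 L m j ?P (cfl L (vfloor x))"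
      by (rule Q1_scale[OF Y'])
    also have "Q1 L m j ?P (cfl L (vfloor x)) = Q1 L m j \<psi> (cfl L (vfloor x))" by (rule Q1_Q1s[OF Y' j(2)])
    finally show ?thesis by (simp add: algebra_simps)
  qed
  have QJsP: "QJs L m j (Q1s L m j (Q1 L m j (QJ L m j \<phi>0))) x = (1 + ?B / ?c) * Q1 L m j \<psi> (cfl L (vfloor x))"
    using x vf Q1phi by (simp add: QJs_expl[OF jm] Q1s_expl[OF j(2)])
  have coef: "complex_of_real (aj a L (Suc j) / real L ^ 2) * (1 + ?B / ?c) = ?B"
  proof -
    have "aj a L (Suc j) / real L ^ 2 * (1 + (a / real L ^ 2) / aj a L j) = a / real L ^ 2"
    proof -
      have gen: "\<alpha> * b / (\<alpha> + b) * (1 + b / \<alpha>) = b" if "\<alpha> > 0" "b > 0" for \<alpha> b :: real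
      proof -
        have "1 + b / \<alpha> = (\<alpha> + b) / \<alpha>" using that by (simp add: field_simps)
        hence "\<alpha> * b / (\<alpha> + b) * (1 + b / \<alpha>) = (\<alpha> * b) * (\<alpha> + b) / ((\<alpha> + b) * \<alpha>)" by simp
        also have "\<dots> = b" using that by simp
        finally show ?thesis .
      qed
      have "a / real L ^ 2 > 0" using apos Lpos by simp
      thus ?thesis unfolding aj_rel[OF j(1), symmetric] using gen aj_pos[OF j(1)] by blast
    qed
    hence "complex_of_real (aj a L (Suc j) / real L ^ 2 * (1 + (a / real L ^ 2) / aj a L j)) = ?B" by (simp only:)
    thus ?thesis by (simp only: of_real_mult of_real_add of_real_divide of_real_1)
  qed
  have "- nlap (1 / real L ^ j) (OmJ L m j) \<phi>0 x + complex_of_real (mubar mu0 L j) * \<phi>0 x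
        = f x + ?c * ?W x - ?c * QJs L m j (QJ L m j \<phi>0) x"
    using hA unfolding Aop_def by (simp add: algebra_simps)
  also have "\<dots> = f x - ?B * Q1 L m j \<psi> (cfl L (vfloor x))"
    unfolding QJsQJ W Pv using cnz by (simp add: algebra_simps)
  finally have e1: "- nlap (1 / real L ^ j) (OmJ L m j) \<phi>0 x + complex_of_real (mubar mu0 L j) * \<phi>0 x
        = f x - ?B * Q1 L m j \<psi> (cfl L (vfloor x))" .
  show "- nlap (1 / real L ^ j) (OmJ L m j) \<phi>0 x + complex_of_real (mubar mu0 L j) * \<phi>0 x
     + complex_of_real (aj a L (Suc j) / real L ^ 2) * QJs L m j (Q1s L m j (Q1 L m j (QJ L m j \<phi>0))) x = f x"
    unfolding e1 QJsP mult.assoc[symmetric] coef by simp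
qed

end

context Mset begin

lemma Pprime:
  fixes \<phi> :: "real^'d \<Rightarrow> complex"
  assumes j: "j < m" and x: "x \<in> OmJ L m (Suc j)"
  shows "QJs L m j (Q1s L m j (Q1 L m j (QJ L m j \<phi>))) (real L *\<^sub>R x)
    = complex_of_real (1 / real L ^ CARD('d)) * (complex_of_real (1 / (real L ^ j) ^ CARD('d)) *
        (\<Sum>z\<in>{z \<in> OmJ L m (Suc j). vfloor z = vfloor x}. \<phi> (real L *\<^sub>R z)))"
proof -
  have jm: "j \<le> m" using j by simp
  have Lx: "real L *\<^sub>R x \<in> OmJ L m j" using x lat_scale by blast
  have vLx: "vfloor (real L *\<^sub>R x) \<in> OmJj L m j" using vfloor_S[OF Lx jm] .
  define Y where "Y = real L *\<^sub>R vfloor x"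
  have Yc: "cfl L (vfloor (real L *\<^sub>R x)) = Y" unfolding Y_def by (rule cfl_vfloor_scale[OF x])
  have YU: "Y \<in> OmJj1 L m j" using cfl_T[OF vLx j] Yc by simp
  define F where "F = {y \<in> OmJj L m j. cfl L y = Y}"
  define S' where "S' = {z \<in> OmJ L m j. cfl L (vfloor z) = Y}"
  have "QJs L m j (Q1s L m j (Q1 L m j (QJ L m j \<phi>))) (real L *\<^sub>R x) = Q1 L m j (QJ L m j \<phi>) Y"
    using Lx vLx Yc by (simp add: QJs_expl[OF jm] Q1s_expl[OF j])
  also have "\<dots> = complex_of_real (1 / real L ^ CARD('d)) * (\<Sum>y\<in>F. QJ L m j \<phi> y)"
    unfolding Q1_expl[OF YU] F_def ..
  also have "(\<Sum>y\<in>F. QJ L m j \<phi> y) = (\<Sum>y\<in>F. complex_of_real (1 / (real L ^ j) ^ CARD('d)) *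
      (\<Sum>z\<in>{z \<in> OmJ L m j. vfloor z = y}. \<phi> z))"
    by (rule sum.cong) (auto simp: F_def QJ_expl)
  also have "\<dots> = complex_of_real (1 / (real L ^ j) ^ CARD('d)) * (\<Sum>y\<in>F. \<Sum>z\<in>{z \<in> OmJ L m j. vfloor z = y}. \<phi> z)"
    by (simp add: sum_distrib_left)
  also have "(\<Sum>y\<in>F. \<Sum>z\<in>{z \<in> OmJ L m j. vfloor z = y}. \<phi> z) = (\<Sum>y\<in>F. \<Sum>z\<in>{z \<in> S'. vfloor z = y}. \<phi> z)"
  proof (rule sum.cong[OF refl])
    fix y assume "y \<in> F"
    hence "{z \<in> OmJ L m j. vfloor z = y} = {z \<in> S'. vfloor z = y}" by (auto simp: F_def S'_def)
    thus "(\<Sum>z\<in>{z \<in> OmJ L m j. vfloor z = y}. \<phi> z) = (\<Sum>z\<in>{z \<in> S'. vfloor z = y}. \<phi> z)" by simp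
  qed
  also have "\<dots> = sum \<phi> S'"
  proof (rule sum.group)
    show "finite S'" unfolding S'_def by (rule finite_subset[OF _ S_fin]) auto
    show "finite F" unfolding F_def by (rule finite_subset[OF _ T_fin]) auto
    show "vfloor ` S' \<subseteq> F" unfolding S'_def F_def using vfloor_S[OF _ jm] by auto
  qed
  also have "\<dots> = (\<Sum>z\<in>{z \<in> OmJ L m (Suc j). vfloor z = vfloor x}. \<phi> (real L *\<^sub>R z))"
  proof (rule sum.reindex_bij_witness[of _ "\<lambda>z. real L *\<^sub>R z" "\<lambda>z'. inverse (real L) *\<^sub>R z'"])
    fix a assume a: "a \<in> S'"
    show "real L *\<^sub>R (inverse (real L) *\<^sub>R a) = a" using Lpos by simp
    show "\<phi> (real L *\<^sub>R (inverse (real L) *\<^sub>R a)) = \<phi> a" using Lpos by simp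
    have aS: "a \<in> OmJ L m j" and ca: "cfl L (vfloor a) = Y" using a by (auto simp: S'_def)
    have "inverse (real L) *\<^sub>R a \<in> OmJ L m (Suc j)" using aS Lpos lat_scale[of "inverse (real L) *\<^sub>R a" m j] by simp
    moreover have "vfloor (inverse (real L) *\<^sub>R a) = vfloor x"
    proof -
      have "real L *\<^sub>R vfloor (inverse (real L) *\<^sub>R a) = real L *\<^sub>R vfloor x"
        using cfl_vfloor_S[OF aS] ca Y_def by metis
      thus ?thesis using Lpos by (metis less_numeral_extra(3) of_nat_0_less_iff scaleR_cancel_left)
    qed
    ultimately show "inverse (real L) *\<^sub>R a \<in> {z \<in> OmJ L m (Suc j). vfloor z = vfloor x}" by simp
  next
    fix b assume b: "b \<in> {z \<in> OmJ L m (Suc j). vfloor z = vfloor x}"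
    show "inverse (real L) *\<^sub>R (real L *\<^sub>R b) = b" using Lpos by simp
    have "real L *\<^sub>R b \<in> OmJ L m j" using b lat_scale by blast
    moreover have "cfl L (vfloor (real L *\<^sub>R b)) = Y" using b cfl_vfloor_scale[of b m j] by (simp add: Y_def)
    ultimately show "real L *\<^sub>R b \<in> S'" by (simp add: S'_def)
  qed
  finally show ?thesis .
qed

lemma nlap_lat_scale:
  fixes \<phi> :: "real^'d \<Rightarrow> complex"
  shows "nlap (1 / real L ^ Suc j) (OmJ L m (Suc j)) (\<lambda>z. \<phi> (real L *\<^sub>R z)) x
     = complex_of_real (real L ^ 2) * nlap (1 / real L ^ j) (OmJ L m j) \<phi> (real L *\<^sub>R x)"
proof -
  have sc: "real L *\<^sub>R (x + (1 / real L ^ Suc j) *\<^sub>R v) = real L *\<^sub>R x + (1 / real L ^ j) *\<^sub>R v"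
    "real L *\<^sub>R (x - (1 / real L ^ Suc j) *\<^sub>R v) = real L *\<^sub>R x - (1 / real L ^ j) *\<^sub>R v" for v :: "real^'d"
    using Lpos by (simp_all add: scaleR_right_distrib scaleR_right_diff_distrib)
  have mem: "z \<in> OmJ L m (Suc j) \<longleftrightarrow> real L *\<^sub>R z \<in> OmJ L m j" for z :: "real^'d" by (rule lat_scale)
  have dt: "dterm (1 / real L ^ Suc j) (OmJ L m (Suc j)) (\<lambda>z. \<phi> (real L *\<^sub>R z)) x \<mu>
      = dterm (1 / real L ^ j) (OmJ L m j) \<phi> (real L *\<^sub>R x) \<mu>" for \<mu>
    unfolding dterm_def mem sc ..
  have c: "1 / (1 / real L ^ Suc j)^2 = real L ^ 2 * (1 / (1 / real L ^ j)^2)"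
    by (simp add: power_mult_distrib power2_eq_square)
  show ?thesis unfolding nlap_alt2 dt c by simp
qed

lemma scale_step:
  fixes \<phi> F :: "real^'d \<Rightarrow> complex"
  assumes j: "1 \<le> j" "Suc j \<le> m" and \<phi>V: "\<phi> \<in> Vsp (OmJ L m j)"
    and eq: "\<forall>X\<in>OmJ L m j. - nlap (1 / real L ^ j) (OmJ L m j) \<phi> X + complex_of_real (mubar mu0 L j) * \<phi> X
     + complex_of_real (aj a L (Suc j) / real L ^ 2) * QJs L m j (Q1s L m j (Q1 L m j (QJ L m j \<phi>))) X = F X"
  shows "Gop L m a mu0 (Suc j) (\<lambda>x. F (real L *\<^sub>R x)) = (\<lambda>x. complex_of_real (1 / real L ^ 2) * \<phi> (real L *\<^sub>R x))"
proof (rule G_unique)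
  show "1 \<le> Suc j" "Suc j \<le> m" using j by auto
  show "(\<lambda>x. complex_of_real (1 / real L ^ 2) * \<phi> (real L *\<^sub>R x)) \<in> Vsp (OmJ L m (Suc j))"
    using \<phi>V lat_scale by (auto simp: Vsp_def)
  fix x :: "real^'d" assume x: "x \<in> OmJ L m (Suc j)"
  have jm: "j < m" using j by simp
  have Lx: "real L *\<^sub>R x \<in> OmJ L m j" using x lat_scale by blast
  let ?c0 = "complex_of_real (1 / real L ^ 2)"
  let ?h = "\<lambda>x. ?c0 * \<phi> (real L *\<^sub>R x)"
  have n: "nlap (1 / real L ^ Suc j) (OmJ L m (Suc j)) ?h x = nlap (1 / real L ^ j) (OmJ L m j) \<phi> (real L *\<^sub>R x)"
    unfolding nlap_scale nlap_lat_scale using Lpos by simp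
  have mu: "complex_of_real (mubar mu0 L (Suc j)) * ?c0 = complex_of_real (mubar mu0 L j)"
  proof -
    have pp: "real L ^ (2 * Suc j) = real L ^ 2 * real L ^ (2 * j)" by (simp add: power_add[symmetric])
    have "mubar mu0 L (Suc j) * (1 / real L ^ 2) = mubar mu0 L j"
      unfolding mubar_def pp using Lpos by simp
    thus ?thesis by (metis of_real_mult)
  qed
  have q: "complex_of_real (aj a L (Suc j)) * QJs L m (Suc j) (QJ L m (Suc j) ?h) x
     = complex_of_real (aj a L (Suc j) / real L ^ 2) * QJs L m j (Q1s L m j (Q1 L m j (QJ L m j \<phi>))) (real L *\<^sub>R x)"
  proof -
    have pw: "(real L ^ Suc j) ^ CARD('d) = real L ^ CARD('d) * (real L ^ j) ^ CARD('d)"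
      by (simp add: power_mult_distrib)
    define Sm where "Sm = (\<Sum>z\<in>{z \<in> OmJ L m (Suc j). vfloor z = vfloor x}. \<phi> (real L *\<^sub>R z))"
    have hs: "(\<Sum>z\<in>{z \<in> OmJ L m (Suc j). vfloor z = vfloor x}. ?c0 * \<phi> (real L *\<^sub>R z)) = ?c0 * Sm"
      unfolding Sm_def by (simp add: sum_distrib_left)
    have cr: "aj a L (Suc j) * (1 / (real L ^ Suc j) ^ CARD('d)) * (1 / real L ^ 2)
        = aj a L (Suc j) / real L ^ 2 * (1 / real L ^ CARD('d)) * (1 / (real L ^ j) ^ CARD('d))"
      unfolding pw by simp
    have "complex_of_real (aj a L (Suc j)) * QJs L m (Suc j) (QJ L m (Suc j) ?h) x
        = complex_of_real (aj a L (Suc j) * (1 / (real L ^ Suc j) ^ CARD('d)) * (1 / real L ^ 2)) * Sm"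
      unfolding QJsQJ_at[OF j(2) x] hs by (simp only: of_real_mult mult.assoc)
    also have "\<dots> = complex_of_real (aj a L (Suc j) / real L ^ 2) * QJs L m j (Q1s L m j (Q1 L m j (QJ L m j \<phi>))) (real L *\<^sub>R x)"
      unfolding Pprime[OF jm x] Sm_def[symmetric] cr by (simp only: of_real_mult mult.assoc)
    finally show ?thesis .
  qed
  show "Aop (Suc j) ?h x = F (real L *\<^sub>R x)"
  proof -
    have "Aop (Suc j) ?h x = - nlap (1 / real L ^ j) (OmJ L m j) \<phi> (real L *\<^sub>R x)
       + complex_of_real (mubar mu0 L (Suc j)) * ?c0 * \<phi> (real L *\<^sub>R x)
       + complex_of_real (aj a L (Suc j) / real L ^ 2) * QJs L m j (Q1s L m j (Q1 L m j (QJ L m j \<phi>))) (real L *\<^sub>R x)"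
      unfolding Aop_def n q by (simp add: mult.assoc)
    also have "\<dots> = F (real L *\<^sub>R x)" unfolding mu using eq Lx by blast
    finally show ?thesis .
  qed
qed

end

lemma rescale_comp: "s \<noteq> 0 \<Longrightarrow> t \<noteq> 0 \<Longrightarrow> rescale s (rescale t f) = rescale (s * t) f"
  by (simp add: rescale_def fun_eq_iff mult.commute)

context Mset begin

lemma G_zero:
  assumes j: "1 \<le> j" "j \<le> m"
  shows "Gop L m a mu0 j (\<lambda>_. 0) = (\<lambda>_. 0)"
  using G_scale[OF j, of 0 "\<lambda>_. 0"] by simp

lemma Bop_inj:
  assumes j: "1 \<le> j" "Suc j \<le> m"
  shows "injop (OmJj L m j) (Bop j)"
  unfolding injop_def
proof (intro ballI impI)
  fix \<psi> :: "real^'d \<Rightarrow> complex"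
  assume \<psi>V: "\<psi> \<in> Vsp (OmJj L m j)" and z: "\<forall>y\<in>OmJj L m j. Bop j \<psi> y = 0"
  have jm: "j < m" "j \<le> m" using j by auto
  let ?c = "complex_of_real (aj a L j)" and ?B = "complex_of_real (a / real L ^ 2)"
  let ?G = "Gop L m a mu0 j"
  have hB: "\<forall>y\<in>OmJj L m j. Bop j \<psi> y = ?c * QJ L m j (?G (\<lambda>_. 0)) y"
    using z by (simp add: G_zero[OF j(1) jm(2)] QJ_expl)
  define \<phi>0 where "\<phi>0 = (\<lambda>z. ?G (\<lambda>_. 0) z + ?c * ?G (QJs L m j \<psi>) z)"
  have eq: "\<forall>x\<in>OmJ L m j. - nlap (1 / real L ^ j) (OmJ L m j) \<phi>0 x + complex_of_real (mubar mu0 L j) * \<phi>0 x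
     + complex_of_real (aj a L (Suc j) / real L ^ 2) * QJs L m j (Q1s L m j (Q1 L m j (QJ L m j \<phi>0))) x = (\<lambda>_. 0) x"
    unfolding \<phi>0_def by (rule schur[OF j(1) jm(1) hB])
  have GZ: "x \<notin> OmJ L m j \<Longrightarrow> Gop L m a mu0 j g x = 0" for g x
    using G_sol[OF j(1) jm(2), of g] by (simp add: Vsp_def)
  have \<phi>V: "\<phi>0 \<in> Vsp (OmJ L m j)"
    by (simp add: \<phi>0_def Vsp_def GZ)
  have "Gop L m a mu0 (Suc j) (\<lambda>x. (\<lambda>_. 0) (real L *\<^sub>R x)) = (\<lambda>x. complex_of_real (1 / real L ^ 2) * \<phi>0 (real L *\<^sub>R x))"
    by (rule scale_step[OF j \<phi>V eq])
  moreover have "Gop L m a mu0 (Suc j) (\<lambda>_. 0) = (\<lambda>_. 0)" using G_zero[of "Suc j"] j by simp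
  ultimately have "(\<lambda>x. complex_of_real (1 / real L ^ 2) * \<phi>0 (real L *\<^sub>R x)) = (\<lambda>_. 0)"
    by metis
  hence z0: "\<phi>0 (real L *\<^sub>R x) = 0" for x using Lpos by (simp add: fun_eq_iff)
  have \<phi>z: "\<phi>0 X = 0" for X
    using z0[of "inverse (real L) *\<^sub>R X"] Lpos by simp
  have hQ: "\<forall>y\<in>OmJj L m j. QJ L m j \<phi>0 y = \<psi> y + ?B / ?c * Q1s L m j (Q1 L m j \<psi>) y"
    unfolding \<phi>0_def by (rule schur_Q[OF j(1) jm(1) hB])
  have hz: "\<forall>y\<in>OmJj L m j. \<psi> y + ?B / ?c * Q1s L m j (Q1 L m j \<psi>) y = 0"
    using hQ \<phi>z by (simp add: QJ_expl)
  have "0 = ip 1 (OmJj L m j) \<psi> (\<lambda>y. \<psi> y + ?B / ?c * Q1s L m j (Q1 L m j \<psi>) y)"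
    using hz by (simp add: ip_def)
  also have "\<dots> = ip 1 (OmJj L m j) \<psi> \<psi> + ?B / ?c * ip 1 (OmJj L m j) \<psi> (Q1s L m j (Q1 L m j \<psi>))"
    by (simp only: ip_add2 ip_scale2)
  also have "ip 1 (OmJj L m j) \<psi> (Q1s L m j (Q1 L m j \<psi>)) = ip (real L) (OmJj1 L m j) (Q1 L m j \<psi>) (Q1 L m j \<psi>)"
    by (rule Q1_adj[OF jm(1), symmetric])
  finally have e: "0 = complex_of_real ((\<Sum>x\<in>OmJj L m j. (cmod (\<psi> x))^2)
      + (a / real L ^ 2) / aj a L j * (real L ^ CARD('d) * (\<Sum>x\<in>OmJj1 L m j. (cmod (Q1 L m j \<psi> x))^2)))"
    unfolding ip_self by (simp only: of_real_add of_real_mult of_real_divide power_one mult_1_left)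
  have p: "(a / real L ^ 2) / aj a L j > 0" using apos aj_pos[OF j(1)] Lpos by simp
  have n1: "(\<Sum>x\<in>OmJj L m j. (cmod (\<psi> x))^2) \<ge> 0" by (intro sum_nonneg) auto
  have n2: "real L ^ CARD('d) * (\<Sum>x\<in>OmJj1 L m j. (cmod (Q1 L m j \<psi> x))^2) \<ge> 0"
    using Lpos by (intro mult_nonneg_nonneg sum_nonneg) auto
  from e[symmetric] have "(\<Sum>x\<in>OmJj L m j. (cmod (\<psi> x))^2)
      + (a / real L ^ 2) / aj a L j * (real L ^ CARD('d) * (\<Sum>x\<in>OmJj1 L m j. (cmod (Q1 L m j \<psi> x))^2)) = 0"
    unfolding of_real_eq_0_iff .
  hence "(\<Sum>x\<in>OmJj L m j. (cmod (\<psi> x))^2) = 0" using n1 n2 p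
    by (smt (verit) mult_nonneg_nonneg)
  hence "ip 1 (OmJj L m j) \<psi> \<psi> = 0" unfolding ip_self by simp
  hence "\<forall>y\<in>OmJj L m j. \<psi> y = 0" using ip_self_zero[of 1 "OmJj L m j" \<psi>] T_fin by auto
  thus "\<psi> = (\<lambda>_. 0)" using \<psi>V by (auto simp: Vsp_def fun_eq_iff)
qed

lemma Cop_sol:
  assumes j: "1 \<le> j" "Suc j \<le> m"
  shows "Cop L m a mu0 j g \<in> Vsp (OmJj L m j) \<and> (\<forall>y\<in>OmJj L m j. Bop j (Cop L m a mu0 j g) y = g y)"
  unfolding Cop_B by (rule opinv_sol[OF T_fin Bop_linop Bop_inj[OF j]]) (use j in auto)

lemma step:
  fixes f :: "real^'d \<Rightarrow> complex"
  assumes j: "1 \<le> j" "Suc j \<le> m"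
  shows "Gop L m a mu0 (Suc j) f = (\<lambda>x. complex_of_real (1 / real L ^ 2) *
     (Gop L m a mu0 j (rescale (real L) f) (real L *\<^sub>R x) + Cp L m a mu0 j (rescale (real L) f) (real L *\<^sub>R x)))"
proof -
  have jm: "j < m" "j \<le> m" using j by auto
  define F where "F = rescale (real L) f"
  define \<psi> where "\<psi> = Cop L m a mu0 j (Hs L m a mu0 j F)"
  have hB: "\<forall>y\<in>OmJj L m j. Bop j \<psi> y = complex_of_real (aj a L j) * QJ L m j (Gop L m a mu0 j F) y"
    using Cop_sol[OF j, of "Hs L m a mu0 j F"] by (simp add: \<psi>_def Hs_expl[OF j(1) jm(2)])
  define \<phi>0 where "\<phi>0 = (\<lambda>z. Gop L m a mu0 j F z + complex_of_real (aj a L j) * Gop L m a mu0 j (QJs L m j \<psi>) z)"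
  have eq: "\<forall>x\<in>OmJ L m j. - nlap (1 / real L ^ j) (OmJ L m j) \<phi>0 x + complex_of_real (mubar mu0 L j) * \<phi>0 x
     + complex_of_real (aj a L (Suc j) / real L ^ 2) * QJs L m j (Q1s L m j (Q1 L m j (QJ L m j \<phi>0))) x = F x"
    unfolding \<phi>0_def by (rule schur[OF j(1) jm(1) hB])
  have GZ: "x \<notin> OmJ L m j \<Longrightarrow> Gop L m a mu0 j g x = 0" for g x
    using G_sol[OF j(1) jm(2), of g] by (simp add: Vsp_def)
  have \<phi>V: "\<phi>0 \<in> Vsp (OmJ L m j)"
    by (simp add: \<phi>0_def Vsp_def GZ)
  have "Gop L m a mu0 (Suc j) (\<lambda>x. F (real L *\<^sub>R x)) = (\<lambda>x. complex_of_real (1 / real L ^ 2) * \<phi>0 (real L *\<^sub>R x))"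
    by (rule scale_step[OF j \<phi>V eq])
  moreover have "(\<lambda>x. F (real L *\<^sub>R x)) = f" using Lpos by (simp add: F_def rescale_def)
  moreover have "\<phi>0 = (\<lambda>z. Gop L m a mu0 j F z + Cp L m a mu0 j F z)"
    by (simp add: \<phi>0_def Cp_def Hop_def \<psi>_def)
  ultimately show ?thesis by (simp add: F_def)
qed

lemma main_ind:
  fixes f :: "real^'d \<Rightarrow> complex"
  assumes k: "1 \<le> k" "k \<le> m" and x: "x \<in> OmJ L m k"
  shows "Gop L m a mu0 k f x =
     (\<Sum>j\<in>{1..k-1}. complex_of_real (1 / (real L ^ (k - j))^2) *
        Cp L m a mu0 j (rescale (real L ^ (k - j)) f) (real L ^ (k - j) *\<^sub>R x))
     + complex_of_real (1 / (real L ^ (k - 1))^2) *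
        Gop L m a mu0 1 (rescale (real L ^ (k - 1)) f) (real L ^ (k - 1) *\<^sub>R x)"
  using k x
proof (induction k arbitrary: f x rule: nat_induct_at_least)
  case base
  have "rescale 1 f = f" by (simp add: rescale_def fun_eq_iff)
  thus ?case by simp
next
  case (Suc k)
  let ?F = "rescale (real L) f"
  have km: "k \<le> m" using Suc by simp
  have Lx: "real L *\<^sub>R x \<in> OmJ L m k" using Suc.prems lat_scale by blast
  have IH: "Gop L m a mu0 k ?F (real L *\<^sub>R x) =
     (\<Sum>j\<in>{1..k-1}. complex_of_real (1 / (real L ^ (k - j))^2) *
        Cp L m a mu0 j (rescale (real L ^ (k - j)) ?F) (real L ^ (k - j) *\<^sub>R (real L *\<^sub>R x)))
     + complex_of_real (1 / (real L ^ (k - 1))^2) *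
        Gop L m a mu0 1 (rescale (real L ^ (k - 1)) ?F) (real L ^ (k - 1) *\<^sub>R (real L *\<^sub>R x))"
    using Suc.IH[OF km Lx] .
  have pw: "real L ^ (k - j) * real L = real L ^ (Suc k - j)" if "j \<le> k" for j
    using that by (simp add: Suc_diff_le power_Suc2)
  have resc: "rescale (real L ^ (k - j)) ?F = rescale (real L ^ (Suc k - j)) f" if "j \<le> k" for j
    using Lpos pw[OF that] by (simp add: rescale_comp)
  have pt: "real L ^ (k - j) *\<^sub>R (real L *\<^sub>R x) = real L ^ (Suc k - j) *\<^sub>R x" if "j \<le> k" for j
    using pw[OF that] by (simp add: mult.commute)
  have cf: "complex_of_real (1 / real L ^ 2) * complex_of_real (1 / (real L ^ (k - j))^2)
      = complex_of_real (1 / (real L ^ (Suc k - j))^2)" if "j \<le> k" for j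
  proof -
    have "1 / real L ^ 2 * (1 / (real L ^ (k - j))^2) = 1 / (real L ^ (Suc k - j))^2"
      unfolding pw[OF that, symmetric] by (simp add: power_mult_distrib)
    thus ?thesis by (metis of_real_mult)
  qed
  have sum_eq: "complex_of_real (1 / real L ^ 2) * (\<Sum>j\<in>{1..k-1}. complex_of_real (1 / (real L ^ (k - j))^2) *
        Cp L m a mu0 j (rescale (real L ^ (k - j)) ?F) (real L ^ (k - j) *\<^sub>R (real L *\<^sub>R x)))
      = (\<Sum>j\<in>{1..k-1}. complex_of_real (1 / (real L ^ (Suc k - j))^2) *
        Cp L m a mu0 j (rescale (real L ^ (Suc k - j)) f) (real L ^ (Suc k - j) *\<^sub>R x))"
    unfolding sum_distrib_left
  proof (rule sum.cong[OF refl])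
    fix j assume "j \<in> {1..k-1}"
    hence jk: "j \<le> k" by auto
    show "complex_of_real (1 / real L ^ 2) * (complex_of_real (1 / (real L ^ (k - j))^2) *
        Cp L m a mu0 j (rescale (real L ^ (k - j)) ?F) (real L ^ (k - j) *\<^sub>R (real L *\<^sub>R x)))
      = complex_of_real (1 / (real L ^ (Suc k - j))^2) *
        Cp L m a mu0 j (rescale (real L ^ (Suc k - j)) f) (real L ^ (Suc k - j) *\<^sub>R x)"
      unfolding mult.assoc[symmetric] cf[OF jk] resc[OF jk] pt[OF jk] ..
  qed
  have last_eq: "complex_of_real (1 / real L ^ 2) * (complex_of_real (1 / (real L ^ (k - 1))^2) *
        Gop L m a mu0 1 (rescale (real L ^ (k - 1)) ?F) (real L ^ (k - 1) *\<^sub>R (real L *\<^sub>R x)))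
      = complex_of_real (1 / (real L ^ (Suc k - 1))^2) *
        Gop L m a mu0 1 (rescale (real L ^ (Suc k - 1)) f) (real L ^ (Suc k - 1) *\<^sub>R x)"
    using Suc.hyps by (simp only: mult.assoc[symmetric] cf resc pt)
  have setk: "{1..Suc k - 1} = insert k {1..k-1}" using Suc.hyps by auto
  have sk: "(\<Sum>j\<in>{1..Suc k - 1}. T j) = T k + (\<Sum>j\<in>{1..k-1}. T j)" for T :: "nat \<Rightarrow> complex"
    unfolding setk by (rule sum.insert) auto
  have term_k: "complex_of_real (1 / (real L ^ (Suc k - k))^2) *
        Cp L m a mu0 k (rescale (real L ^ (Suc k - k)) f) (real L ^ (Suc k - k) *\<^sub>R x)
      = complex_of_real (1 / real L ^ 2) * Cp L m a mu0 k ?F (real L *\<^sub>R x)" by simp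
  have "Gop L m a mu0 (Suc k) f x = complex_of_real (1 / real L ^ 2) *
     (Gop L m a mu0 k ?F (real L *\<^sub>R x) + Cp L m a mu0 k ?F (real L *\<^sub>R x))"
    using step[OF Suc.hyps Suc.prems(1), of f] by simp
  also have "\<dots> = (\<Sum>j\<in>{1..Suc k - 1}. complex_of_real (1 / (real L ^ (Suc k - j))^2) *
        Cp L m a mu0 j (rescale (real L ^ (Suc k - j)) f) (real L ^ (Suc k - j) *\<^sub>R x))
     + complex_of_real (1 / (real L ^ (Suc k - 1))^2) *
        Gop L m a mu0 1 (rescale (real L ^ (Suc k - 1)) f) (real L ^ (Suc k - 1) *\<^sub>R x)"
    unfolding IH distrib_left sum_eq last_eq sk term_k
    by (simp only: add.assoc add.commute add.left_commute)
  finally show ?case .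
qed

end

theorem mainTheorem9:
  fixes L k m :: nat and a mu0 :: real
    and f :: "real^'d \<Rightarrow> complex" and x :: "real^'d"
  assumes "odd L" and "L > 1" and "k \<ge> 1" and "m \<ge> k"
    and "0 < a" and "a \<le> 1" and "mu0 \<ge> 0"
    and "x \<in> lat (1 / real L ^ k) (L ^ m)"
  shows "Gop L m a mu0 k f x =
     (\<Sum>j\<in>{1..k-1}. complex_of_real (1 / (real L ^ (k - j))^2) *
        Cp L m a mu0 j (rescale (real L ^ (k - j)) f) (real L ^ (k - j) *\<^sub>R x))
     + complex_of_real (1 / (real L ^ (k - 1))^2) *
        Gop L m a mu0 1 (rescale (real L ^ (k - 1)) f) (real L ^ (k - 1) *\<^sub>R x)"
proof -
  interpret Mset L m a mu0 by unfold_locales (use assms in auto)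
  have xS: "x \<in> OmJ L m k" unfolding OmJ_def using assms(8) .
  show ?thesis by (rule main_ind) (use assms xS in auto)
qed

end
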